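(* Consider the Hermitean matrix model of size $\mathcal{N}+1$ described in the context, with correlation functions $G_{|a_1\dots a_N|}$, and set $W_{|a|}:=2\lambda G_{|a|}+2E_a$ and $P_{ab}:=\frac{1}{E_a^2-E_b^2}$. Then for every $N\geq 2$ and every pairwise different indices $a_1,\dots,a_N\in\{0,\dots,\mathcal{N}\}$, \[ G_{|a_1a_2\dots a_N|}=\frac{\lambda^{N-2}}{2}\sum_{k=1}^N W_{|a_k|}\prod_{l=1,\,l\neq k}^N P_{a_ka_l}. \]
   Context: Fix an integer $\mathcal{N}\geq 1$, a constant $V>0$, a coupling constant $\lambda$ (real or complex), a constant $\kappa$, a mass $\mu>0$ and a differentiable strictly increasing function $e:\mathbb{R}_+\to\mathbb{R}_+$ with $e(0)=0$; put $E_m:=\mu^2\big(\frac12+e\big(\frac{m}{\mu^2V}\big)\big)$, $m=0,\dots,\mathcal{N}$, and $E=\mathrm{diag}(E_0,\dots,E_{\mathcal{N}})$. For Hermitean $(\mathcal{N}+1)\times(\mathcal{N}+1)$ matrices $\Phi$ let $S[\Phi]=V\,\mathrm{tr}(E\Phi^2+\kappa\Phi+\frac{\lambda}{3}\Phi^3)$ and define the partition function $\mathcal{Z}[J]=\int\mathcal{D}\Phi\,\exp(-S[\Phi]+V\,\mathrm{tr}(J\Phi))$ for a source matrix $J$, understood as a formal perturbation series in $\lambda$ (i.e. $\mathcal{Z}[J]=K\exp\big(-\frac{\lambda}{3V^2}\sum_{m,n,k}\frac{\partial^3}{\partial J_{mn}\partial J_{nk}\partial J_{km}}\big)\exp\big(\sum_{m,n}\frac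 V2(J_{nm}-\kappa\delta_{nm})\frac{1}{E_n+E_m}(J_{mn}-\kappa\delta_{nm})\big)$), with the entries $J_{mn}$ treated as independent variables. Write $\frac{\partial^N}{\partial\mathbb{J}_{a_1\dots a_N}}:=\frac{\partial^N}{\partial J_{a_1a_2}\cdots\partial J_{a_{N-1}a_N}\partial J_{a_Na_1}}$. The correlation functions are the coefficients of the expansion of $\log(\mathcal{Z}[J]/\mathcal{Z}[0])$ in cycles of source matrices; for pairwise different indices they are given by \[ G_{|a^1_1\dots a^1_{N_1}|\dots|a^B_1\dots a^B_{N_B}|}=V^{B-2}\frac{\partial^{N_1}}{\partial\mathbb{J}_{a^1_1\dots a^1_{N_1}}}\cdots\frac{\partial^{N_B}}{\partial\mathbb{J}_{a^B_1\dots a^B_{N_B}}}\log\frac{\mathcal{Z}[J]}{\mathcal{Z}[0]}\Big|_{J=0}; \] in particular $G_{|a|}=\frac1V\frac{\partial}{\partial J_{aa}}\log\frac{\mathcal{Z}[J]}{\mathcal{Z}[0]}\big|_{J=0}$ and $G_{|a_1\dots a_N|}$ is the case $B=1$. *)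

theory Defs
  imports "HOL-Analysis.Analysis" "HOL-Computational_Algebra.Formal_Power_Series"
begin

definition Eval :: "real \<Rightarrow> real \<Rightarrow> (real \<Rightarrow> real) \<Rightarrow> nat \<Rightarrow> real" where
  "Eval \<mu> V e m = \<mu>^2 * (1/2 + e (real m / (\<mu>^2 * V)))"

text \<open>Source matrices: J (m,n) = J_mn, complex, entries treated as independent variables.\<close>
type_synonym source = "nat \<times> nat \<Rightarrow> complex"

definition Qsrc :: "nat \<Rightarrow> real \<Rightarrow> real \<Rightarrow> (nat \<Rightarrow> real) \<Rightarrow> source \<Rightarrow> complex" where
  "Qsrc NN V \<kappa> E J =
     (\<Sum>m\<le>NN. \<Sum>n\<le>NN.
        complex_of_real (V/2) * (J (n,m) - (if n = m then complex_of_real \<kappa> else 0))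
        * (J (m,n) - (if n = m then complex_of_real \<kappa> else 0)) / complex_of_real (E n + E m))"

fun pd :: "(nat \<times> nat) list \<Rightarrow> (source \<Rightarrow> complex) \<Rightarrow> source \<Rightarrow> complex" where
  "pd [] f = f"
| "pd (p # ps) f = (\<lambda>J. deriv (\<lambda>t. pd ps f (J(p := t))) (J p))"

definition D3 :: "nat \<Rightarrow> (source \<Rightarrow> complex) \<Rightarrow> source \<Rightarrow> complex" where
  "D3 NN g = (\<lambda>J. \<Sum>m\<le>NN. \<Sum>n\<le>NN. \<Sum>k\<le>NN. pd [(m,n),(n,k),(k,m)] g J)"

text \<open>Partition function Z[J] (up to the constant K, which cancels in Z[J]/Z[0])
  as a formal power series in the coupling lambda:
  exp(-lambda/(3V^2) D3) exp(Q(J)).\<close>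
definition Zser :: "nat \<Rightarrow> real \<Rightarrow> real \<Rightarrow> (nat \<Rightarrow> real) \<Rightarrow> source \<Rightarrow> complex fps" where
  "Zser NN V \<kappa> E J = Abs_fps (\<lambda>n.
     complex_of_real ((- 1 / (3 * V^2)) ^ n / fact n)
     * ((D3 NN ^^ n) (\<lambda>J'. exp (Qsrc NN V \<kappa> E J')) J))"

definition fps_log :: "complex fps \<Rightarrow> complex fps" where
  "fps_log f = fps_const (Ln (fps_nth f 0)) + (fps_ln 1 oo (f / fps_const (fps_nth f 0) - 1))"

definition logZ :: "nat \<Rightarrow> real \<Rightarrow> real \<Rightarrow> (nat \<Rightarrow> real) \<Rightarrow> source \<Rightarrow> complex fps" where
  "logZ NN V \<kappa> E J = fps_log (Zser NN V \<kappa> E J / Zser NN V \<kappa> E (\<lambda>_. 0))"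

definition cycle_idx :: "nat list \<Rightarrow> (nat \<times> nat) list" where
  "cycle_idx as = zip as (tl as @ [hd as])"

text \<open>One-boundary correlation function G_{|a1...aN|} (B = 1, factor V^{B-2} = 1/V),
  a formal power series in lambda.\<close>
definition Gcorr :: "nat \<Rightarrow> real \<Rightarrow> real \<Rightarrow> (nat \<Rightarrow> real) \<Rightarrow> nat list \<Rightarrow> complex fps" where
  "Gcorr NN V \<kappa> E as = Abs_fps (\<lambda>n.
     complex_of_real (1 / V) * pd (cycle_idx as) (\<lambda>J. fps_nth (logZ NN V \<kappa> E J) n) (\<lambda>_. 0))"

end

theory Submission
  imports Defs
begin

unbundle no vec_syntax
notation fps_nth (infixl "$" 75)


inductive_set K :: "(source \<Rightarrow> complex) set" where
  Kconst: "(\<lambda>J. c) \<in> K"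
| Kcoord: "(\<lambda>J. J p) \<in> K"
| Kadd: "f \<in> K \<Longrightarrow> g \<in> K \<Longrightarrow> (\<lambda>J. f J + g J) \<in> K"
| Kmult: "f \<in> K \<Longrightarrow> g \<in> K \<Longrightarrow> (\<lambda>J. f J * g J) \<in> K"
| Kexp: "f \<in> K \<Longrightarrow> (\<lambda>J. exp (f J)) \<in> K"

lemma upd_same[simp]: "(J(p := t))(p := s) = J(p := s)" by simp

lemma Kderiv_ex:
  assumes "f \<in> K"
  shows "\<exists>f'\<in>K. \<forall>J. ((\<lambda>t. f (J(p := t))) has_field_derivative f' J) (at (J p))"
  using assms
proof induction
  case (Kconst c)
  then show ?case by (intro bexI[of _ "\<lambda>J. 0"]) (auto intro: K.intros)
next
  case (Kcoord q)
  show ?case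
  proof (cases "q = p")
    case True
    then show ?thesis by (intro bexI[of _ "\<lambda>J. 1"]) (auto intro!: K.intros derivative_eq_intros)
  next
    case False
    then show ?thesis by (intro bexI[of _ "\<lambda>J. 0"]) (auto intro!: K.intros derivative_eq_intros)
  qed
next
  case (Kadd f g)
  then obtain f' g' where "f'\<in>K" "g'\<in>K" 
    and d: "\<And>J. ((\<lambda>t. f (J(p := t))) has_field_derivative f' J) (at (J p))"
     "\<And>J. ((\<lambda>t. g (J(p := t))) has_field_derivative g' J) (at (J p))" by blast
  have "((\<lambda>t. f (J(p := t)) + g (J(p := t))) has_field_derivative f' J + g' J) (at (J p))" for J
    using DERIV_add[OF d(1)[of J] d(2)[of J]] .
  note D = this
  show ?case apply (rule bexI[of _ "\<lambda>J. f' J + g' J"]) using D apply blast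
    by (intro K.intros \<open>f'\<in>K\<close> \<open>g'\<in>K\<close>)
next
  case (Kmult f g)
  then obtain f' g' where "f'\<in>K" "g'\<in>K" 
    and d: "\<And>J. ((\<lambda>t. f (J(p := t))) has_field_derivative f' J) (at (J p))"
     "\<And>J. ((\<lambda>t. g (J(p := t))) has_field_derivative g' J) (at (J p))" by blast
  have "((\<lambda>t. f (J(p := t)) * g (J(p := t))) has_field_derivative f' J * g J + f J * g' J) (at (J p))" for J
    using DERIV_mult[OF d(1)[of J] d(2)[of J]] by (simp add: mult.commute)
  note D = this
  show ?case apply (rule bexI[of _ "\<lambda>J. f' J * g J + f J * g' J"]) using D apply blast
    by (intro K.intros \<open>f'\<in>K\<close> \<open>g'\<in>K\<close> Kmult.hyps)
next
  case (Kexp f)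
  then obtain f' where "f'\<in>K"
    and d: "\<And>J. ((\<lambda>t. f (J(p := t))) has_field_derivative f' J) (at (J p))" by blast
  have "((\<lambda>t. exp (f (J(p := t)))) has_field_derivative exp (f J) * f' J) (at (J p))" for J
    using DERIV_chain2[OF DERIV_exp d, of J] by simp
  note D = this
  show ?case apply (rule bexI[of _ "\<lambda>J. exp (f J) * f' J"]) using D apply blast
    by (intro K.intros \<open>f'\<in>K\<close> Kexp.hyps)
qed

lemma pd1: "pd [p] f = (\<lambda>J. deriv (\<lambda>t. f (J(p := t))) (J p))" by simp
declare pd.simps(2)[simp del]

lemma pd_eqI:
  assumes "\<And>J. ((\<lambda>t. f (J(p := t))) has_field_derivative g J) (at (J p))"
  shows "pd [p] f = g"
  using assms DERIV_imp_deriv by (auto intro!: ext simp: pd1)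

lemma pd_K_deriv:
  assumes "f \<in> K"
  shows "pd [p] f \<in> K" "((\<lambda>t. f (J(p := t))) has_field_derivative pd [p] f J) (at (J p))"
proof -
  obtain f' where f': "f'\<in>K" "\<And>J. ((\<lambda>t. f (J(p := t))) has_field_derivative f' J) (at (J p))"
    using Kderiv_ex[OF assms] by blast
  have e: "pd [p] f = f'" by (rule pd_eqI) (rule f'(2))
  show "pd [p] f \<in> K" "((\<lambda>t. f (J(p := t))) has_field_derivative pd [p] f J) (at (J p))"
    using f' e by auto
qed

lemma pd_Cons: "pd (p # ps) f = pd [p] (pd ps f)" by (simp add: pd.simps(2))

lemma pd_append: "pd (xs @ ys) f = pd xs (pd ys f)"
  by (induction xs arbitrary: f) (simp_all add: pd.simps(2))

lemma pd_in_K: "f \<in> K \<Longrightarrow> pd ps f \<in> K"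
proof (induction ps)
  case (Cons p ps)
  have "pd (p#ps) f = pd [p] (pd ps f)" by (simp add: pd.simps(2))
  then show ?case using Cons pd_K_deriv(1) by metis
qed simp

lemmas Kd = pd_K_deriv(2)

lemma pd_const: "pd [p] (\<lambda>J. c) = (\<lambda>J. 0)"
  by (rule pd_eqI) auto

lemma pd_coord: "pd [p] (\<lambda>J. J q) = (\<lambda>J. if p = q then 1 else 0)"
  by (rule pd_eqI) (auto intro!: derivative_eq_intros)

lemma pd_add: "f \<in> K \<Longrightarrow> g \<in> K \<Longrightarrow> pd [p] (\<lambda>J. f J + g J) = (\<lambda>J. pd [p] f J + pd [p] g J)"
  by (rule pd_eqI) (rule DERIV_add; rule Kd; simp)

lemma pd_mult: "f \<in> K \<Longrightarrow> g \<in> K \<Longrightarrow> pd [p] (\<lambda>J. f J * g J) = (\<lambda>J. pd [p] f J * g J + f J * pd [p] g J)"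
  apply (rule pd_eqI)
  subgoal for J using DERIV_mult[OF Kd[where f=f and p=p and J=J] Kd[where f=g and p=p and J=J]] by (simp add: mult.commute)
  done

lemma pd_exp: "f \<in> K \<Longrightarrow> pd [p] (\<lambda>J. exp (f J)) = (\<lambda>J. exp (f J) * pd [p] f J)"
  apply (rule pd_eqI)
  subgoal for J using DERIV_chain2[OF DERIV_exp Kd[where f=f and p=p and J=J]] by simp
  done

lemma pd_comm1:
  assumes "f \<in> K"
  shows "pd [p] (pd [q] f) = pd [q] (pd [p] f)"
  using assms
proof induction
  case (Kconst c)
  then show ?case by (simp only: pd_const)
next
  case (Kcoord r)
  then show ?case by (simp only: pd_coord pd_const)
next
  case (Kadd f g)
  then show ?case by (simp only: pd_add pd_K_deriv)
next
  case (Kmult f g)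
  have K: "pd [a] f \<in> K" "pd [a] g \<in> K" "pd [a] (pd [b] f) \<in> K" "pd [a] (pd [b] g) \<in> K" for a b
    using Kmult.hyps by (auto intro: pd_K_deriv)
  show ?case
    using Kmult.IH Kmult.hyps K
    by (simp only: pd_mult pd_add K.intros) (auto simp: algebra_simps)
next
  case (Kexp f)
  have K: "pd [a] f \<in> K" "pd [a] (pd [b] f) \<in> K" "(\<lambda>J. exp (f J)) \<in> K" for a b
    using Kexp.hyps by (auto intro: pd_K_deriv K.intros)
  show ?case
    using Kexp.IH Kexp.hyps K
    by (simp only: pd_mult pd_exp pd_add K.intros) (auto simp: algebra_simps)
qed

lemma K_cmult: "f \<in> K \<Longrightarrow> (\<lambda>J. c * f J) \<in> K"
  by (intro K.intros)

lemma K_uminus: "f \<in> K \<Longrightarrow> (\<lambda>J. - f J) \<in> K"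
  using K_cmult[of f "-1"] by simp

lemma K_diff: "f \<in> K \<Longrightarrow> g \<in> K \<Longrightarrow> (\<lambda>J. f J - g J) \<in> K"
  using Kadd[OF _ K_uminus[of g]] by simp

lemma K_sum: "finite A \<Longrightarrow> (\<And>i. i \<in> A \<Longrightarrow> f i \<in> K) \<Longrightarrow> (\<lambda>J. \<Sum>i\<in>A. f i J) \<in> K"
proof (induction A rule: finite_induct)
  case empty then show ?case using Kconst[of 0] by simp
next
  case (insert x F)
  then show ?case using Kadd[of "f x" "\<lambda>J. \<Sum>i\<in>F. f i J"] by simp
qed

lemma K_prod: "finite A \<Longrightarrow> (\<And>i. i \<in> A \<Longrightarrow> f i \<in> K) \<Longrightarrow> (\<lambda>J. \<Prod>i\<in>A. f i J) \<in> K"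
proof (induction A rule: finite_induct)
  case empty then show ?case using Kconst[of 1] by simp
next
  case (insert x F)
  then show ?case using Kmult[of "f x" "\<lambda>J. \<Prod>i\<in>F. f i J"] by simp
qed

lemma K_pow: "f \<in> K \<Longrightarrow> (\<lambda>J. f J ^ n) \<in> K"
  by (induction n) (auto intro: K.intros Kmult[of f "\<lambda>J. f J ^ n" for n, simplified])

lemma pd_cmult: "f \<in> K \<Longrightarrow> pd [p] (\<lambda>J. c * f J) = (\<lambda>J. c * pd [p] f J)"
  by (simp add: pd_mult Kconst pd_const)

lemma pd_uminus: "f \<in> K \<Longrightarrow> pd [p] (\<lambda>J. - f J) = (\<lambda>J. - pd [p] f J)"
  using pd_cmult[of f p "-1"] by simp

lemma pd_diff: "f \<in> K \<Longrightarrow> g \<in> K \<Longrightarrow> pd [p] (\<lambda>J. f J - g J) = (\<lambda>J. pd [p] f J - pd [p] g J)"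
  using pd_add[OF _ K_uminus[of g], of f p] pd_uminus[of g p] by simp

lemma pd_sum: "finite A \<Longrightarrow> (\<And>i. i \<in> A \<Longrightarrow> f i \<in> K) \<Longrightarrow>
   pd [p] (\<lambda>J. \<Sum>i\<in>A. f i J) = (\<lambda>J. \<Sum>i\<in>A. pd [p] (f i) J)"
proof (induction A rule: finite_induct)
  case empty then show ?case by (simp add: pd_const)
next
  case (insert x F)
  then show ?case using pd_add[of "f x" "\<lambda>J. \<Sum>i\<in>F. f i J" p] K_sum[of F f] by simp
qed

lemma pdl_add: "f \<in> K \<Longrightarrow> g \<in> K \<Longrightarrow> pd ps (\<lambda>J. f J + g J) = (\<lambda>J. pd ps f J + pd ps g J)"
proof (induction ps)
  case (Cons p ps)
  then show ?case by (simp add: pd_Cons[of p ps] pd_add pd_in_K)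
qed simp

lemma pdl_cmult: "f \<in> K \<Longrightarrow> pd ps (\<lambda>J. c * f J) = (\<lambda>J. c * pd ps f J)"
proof (induction ps)
  case (Cons p ps)
  then show ?case by (simp add: pd_Cons[of p ps] pd_cmult pd_in_K)
qed simp

lemma pdl_diff: "f \<in> K \<Longrightarrow> g \<in> K \<Longrightarrow> pd ps (\<lambda>J. f J - g J) = (\<lambda>J. pd ps f J - pd ps g J)"
proof (induction ps)
  case (Cons p ps)
  then show ?case by (simp add: pd_Cons[of p ps] pd_diff pd_in_K)
qed simp

lemma pdl_sum: "finite A \<Longrightarrow> (\<And>i. i \<in> A \<Longrightarrow> f i \<in> K) \<Longrightarrow>
   pd ps (\<lambda>J. \<Sum>i\<in>A. f i J) = (\<lambda>J. \<Sum>i\<in>A. pd ps (f i) J)"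
proof (induction ps)
  case (Cons p ps)
  then show ?case by (simp add: pd_Cons[of p ps] pd_sum pd_in_K)
qed simp

lemma pdl_const: "ps \<noteq> [] \<Longrightarrow> pd ps (\<lambda>J. c) = (\<lambda>J. 0)"
proof (induction ps)
  case (Cons p ps)
  then show ?case by (cases "ps = []") (simp_all add: pd_Cons[of p ps] pd_const)
qed simp

lemma pd_swap: "f \<in> K \<Longrightarrow> pd (xs @ p # q # ys) f = pd (xs @ q # p # ys) f"
proof -
  assume f: "f \<in> K"
  have "pd (p # q # ys) f = pd [p] (pd [q] (pd ys f))" by (simp add: pd_Cons[of _ "_ # _"] pd_Cons[of q ys])
  also have "\<dots> = pd [q] (pd [p] (pd ys f))" using pd_comm1 pd_in_K[OF f] by blast
  also have "\<dots> = pd (q # p # ys) f" by (simp add: pd_Cons[of _ "_ # _"] pd_Cons[of p ys])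
  finally show ?thesis by (simp add: pd_append)
qed

lemma pd_move_front: "f \<in> K \<Longrightarrow> pd (ys1 @ x # ys2) f = pd (x # ys1 @ ys2) f"
proof (induction ys1 arbitrary: ys2 rule: rev_induct)
  case Nil then show ?case by simp
next
  case (snoc y ys)
  have "pd ((ys @ [y]) @ x # ys2) f = pd (ys @ x # y # ys2) f"
    using pd_swap[OF snoc.prems, of ys y x ys2] by simp
  also have "\<dots> = pd (x # ys @ y # ys2) f" using snoc by simp
  finally show ?case by simp
qed

lemma pd_perm: "f \<in> K \<Longrightarrow> mset xs = mset ys \<Longrightarrow> pd xs f = pd ys f"
proof (induction xs arbitrary: ys)
  case Nil then show ?case by simp
next
  case (Cons x xs)
  then have "x \<in> set ys" by (metis list.set_intros(1) set_mset_mset)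
  then obtain ys1 ys2 where ys: "ys = ys1 @ x # ys2" by (meson split_list)
  then have "mset xs = mset (ys1 @ ys2)" using Cons.prems by simp
  then have "pd xs f = pd (ys1 @ ys2) f" using Cons by blast
  then show ?case using pd_move_front[OF Cons.prems(1), of ys1 x ys2] ys
    by (simp add: pd_Cons[of x xs] pd_Cons[of x "ys1 @ ys2"])
qed

lemma K_coordmult: "f \<in> K \<Longrightarrow> (\<lambda>J. J q * f J) \<in> K"
  by (intro K.intros)

lemma pd1_coordmult: "f \<in> K \<Longrightarrow> pd [p] (\<lambda>J. J q * f J) = (\<lambda>J. (if p = q then f J else 0) + J q * pd [p] f J)"
  by (simp add: pd_mult Kcoord pd_coord)

lemma pd_coordmult_notin: "f \<in> K \<Longrightarrow> q \<notin> set ps \<Longrightarrow> pd ps (\<lambda>J. J q * f J) = (\<lambda>J. J q * pd ps f J)"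
proof (induction ps)
  case (Cons p ps)
  then show ?case by (auto simp add: pd_Cons[of p ps] pd1_coordmult pd_in_K)
qed simp


lemma pd1cm: "f \<in> K \<Longrightarrow> pd [p] (\<lambda>J. J q * f J) = (\<lambda>J. of_bool (p = q) * f J + J q * pd [p] f J)"
  by (simp add: pd1_coordmult)

lemmas Ksimps = K.intros K_cmult K_diff K_uminus K_coordmult pd_in_K

lemma pd3_coordmult:
  assumes f: "f \<in> K"
  shows "pd [a,b,c] (\<lambda>J. J q * f J) J = J q * pd [a,b,c] f J + of_bool (a = q) * pd [b,c] f J
      + of_bool (b = q) * pd [a,c] f J + of_bool (c = q) * pd [a,b] f J"
proof -
  have e: "pd [a,b,c] g = pd [a] (pd [b] (pd [c] g))" for g by (simp only: pd_Cons[of a "[b,c]"] pd_Cons[of b "[c]"])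
  have e2: "pd [a,b] g = pd [a] (pd [b] g)" for a b g by (simp only: pd_Cons[of a "[b]"])
  show ?thesis unfolding e e2 using f
    by (simp add: pd1cm pd_add pd_cmult Ksimps algebra_simps pd_const)
qed

lemma ofb_mult: "of_bool P * (a::complex) = (if P then a else 0)" by simp

lemma sum_delta_sq: "x \<le> (NN::nat) \<Longrightarrow> y \<le> NN \<Longrightarrow>
  (\<Sum>m\<le>NN. \<Sum>n\<le>NN. of_bool ((m,n) = (x,y)) * (h m n :: complex)) = h x y"
proof -
  assume xy: "x \<le> NN" "y \<le> NN"
  have "(\<Sum>m\<le>NN. \<Sum>n\<le>NN. of_bool ((m,n) = (x,y)) * h m n) = (\<Sum>m\<le>NN. if m = x then h m y else 0)"
  proof (intro sum.cong refl)
    fix m assume "m \<in> {..NN}"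
    show "(\<Sum>n\<le>NN. of_bool ((m,n) = (x,y)) * h m n) = (if m = x then h m y else 0)"
      using xy by (cases "m = x") (simp_all add: ofb_mult del: of_bool_eq)
  qed
  also have "\<dots> = h x y" using xy by (simp add: sum.delta)
  finally show ?thesis .
qed

definition T :: "nat \<Rightarrow> nat \<Rightarrow> nat \<Rightarrow> (source \<Rightarrow> complex) \<Rightarrow> source \<Rightarrow> complex" where
  "T NN x y f = (\<lambda>J. \<Sum>n\<le>NN. pd [(y,n),(n,x)] f J)"

lemma D_K: "f \<in> K \<Longrightarrow> D3 NN f \<in> K"
  unfolding D3_def by (intro K_sum pd_in_K) auto

lemma Dpow_K: "f \<in> K \<Longrightarrow> (D3 NN ^^ k) f \<in> K"
  by (induction k) (auto intro: D_K)

lemma T_K: "f \<in> K \<Longrightarrow> T NN x y f \<in> K"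
  unfolding T_def by (intro K_sum pd_in_K) auto

lemma D_add: "f \<in> K \<Longrightarrow> g \<in> K \<Longrightarrow> D3 NN (\<lambda>J. f J + g J) = (\<lambda>J. D3 NN f J + D3 NN g J)"
  unfolding D3_def by (simp add: pdl_add sum.distrib)

lemma D_cmult: "f \<in> K \<Longrightarrow> D3 NN (\<lambda>J. c * f J) = (\<lambda>J. c * D3 NN f J)"
  unfolding D3_def by (simp add: pdl_cmult sum_distrib_left)

lemma D_diff: "f \<in> K \<Longrightarrow> g \<in> K \<Longrightarrow> D3 NN (\<lambda>J. f J - g J) = (\<lambda>J. D3 NN f J - D3 NN g J)"
  unfolding D3_def by (simp add: pdl_diff sum_subtractf)

lemma D_sum: "finite A \<Longrightarrow> (\<And>i. i \<in> A \<Longrightarrow> f i \<in> K) \<Longrightarrow>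
   D3 NN (\<lambda>J. \<Sum>i\<in>A. f i J) = (\<lambda>J. \<Sum>i\<in>A. D3 NN (f i) J)"
proof -
  assume a: "finite A" "\<And>i. i \<in> A \<Longrightarrow> f i \<in> K"
  have "D3 NN (\<lambda>J. \<Sum>i\<in>A. f i J) = (\<lambda>J. \<Sum>m\<le>NN. \<Sum>n\<le>NN. \<Sum>k\<le>NN. \<Sum>i\<in>A. pd [(m,n),(n,k),(k,m)] (f i) J)"
    unfolding D3_def using a by (simp add: pdl_sum)
  also have "\<dots> = (\<lambda>J. \<Sum>i\<in>A. D3 NN (f i) J)"
    unfolding D3_def by (intro ext) (simp only: sum.swap[of _ A])
  finally show ?thesis .
qed

lemma pd_D: "f \<in> K \<Longrightarrow> pd ps (D3 NN f) = D3 NN (pd ps f)"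
proof -
  assume f: "f \<in> K"
  have "pd ps (D3 NN f) = (\<lambda>J. \<Sum>m\<le>NN. \<Sum>n\<le>NN. \<Sum>k\<le>NN. pd ps (pd [(m,n),(n,k),(k,m)] f) J)"
    unfolding D3_def using f by (simp add: pdl_sum K_sum pd_in_K)
  also have "\<dots> = D3 NN (pd ps f)"
  proof -
    have c: "pd ps (pd L f) = pd L (pd ps f)" for L
    proof -
      have "pd ps (pd L f) = pd (ps@L) f" by (simp add: pd_append)
      also have "\<dots> = pd (L@ps) f" by (rule pd_perm[OF f]) simp
      also have "\<dots> = pd L (pd ps f)" by (simp add: pd_append)
      finally show ?thesis .
    qed
    show ?thesis unfolding D3_def by (intro ext sum.cong refl fun_cong[OF c])
  qed
  finally show ?thesis .
qed

lemma D_coordmult: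
  assumes f: "f \<in> K" and xy: "x \<le> NN" "y \<le> NN"
  shows "D3 NN (\<lambda>J. J (x,y) * f J) = (\<lambda>J. J (x,y) * D3 NN f J + 3 * T NN x y f J)"
proof
  fix J
  let ?q = "(x,y)"
  have "D3 NN (\<lambda>J. J ?q * f J) J = (\<Sum>m\<le>NN. \<Sum>n\<le>NN. \<Sum>k\<le>NN.
      J ?q * pd [(m,n),(n,k),(k,m)] f J + of_bool ((m,n) = ?q) * pd [(n,k),(k,m)] f J
      + of_bool ((n,k) = ?q) * pd [(m,n),(k,m)] f J + of_bool ((k,m) = ?q) * pd [(m,n),(n,k)] f J)"
    unfolding D3_def using pd3_coordmult[OF f] by simp
  also have "\<dots> = J ?q * D3 NN f J
     + (\<Sum>m\<le>NN. \<Sum>n\<le>NN. \<Sum>k\<le>NN. of_bool ((m,n) = ?q) * pd [(n,k),(k,m)] f J)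
     + (\<Sum>m\<le>NN. \<Sum>n\<le>NN. \<Sum>k\<le>NN. of_bool ((n,k) = ?q) * pd [(m,n),(k,m)] f J)
     + (\<Sum>m\<le>NN. \<Sum>n\<le>NN. \<Sum>k\<le>NN. of_bool ((k,m) = ?q) * pd [(m,n),(n,k)] f J)"
    unfolding D3_def by (simp add: sum.distrib sum_distrib_left)
  also have "(\<Sum>m\<le>NN. \<Sum>n\<le>NN. \<Sum>k\<le>NN. of_bool ((m,n) = ?q) * pd [(n,k),(k,m)] f J) = T NN x y f J"
  proof -
    have "(\<Sum>m\<le>NN. \<Sum>n\<le>NN. \<Sum>k\<le>NN. of_bool ((m,n) = ?q) * pd [(n,k),(k,m)] f J)
       = (\<Sum>m\<le>NN. \<Sum>n\<le>NN. of_bool ((m,n) = ?q) * (\<Sum>k\<le>NN. pd [(n,k),(k,m)] f J))"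
      by (simp add: sum_distrib_left)
    also have "\<dots> = T NN x y f J" unfolding T_def by (rule sum_delta_sq[OF xy])
    finally show ?thesis .
  qed
  also have "(\<Sum>m\<le>NN. \<Sum>n\<le>NN. \<Sum>k\<le>NN. of_bool ((n,k) = ?q) * pd [(m,n),(k,m)] f J) = T NN x y f J"
  proof -
    have "(\<Sum>m\<le>NN. \<Sum>n\<le>NN. \<Sum>k\<le>NN. of_bool ((n,k) = ?q) * pd [(m,n),(k,m)] f J)
       = (\<Sum>m\<le>NN. pd [(m,x),(y,m)] f J)"
      by (rule sum.cong[OF refl], rule sum_delta_sq[OF xy])
    also have "\<dots> = T NN x y f J" unfolding T_def
      by (intro sum.cong refl fun_cong[OF pd_perm[OF f]]) (simp add: add_mset_commute)
    finally show ?thesis .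
  qed
  also have "(\<Sum>m\<le>NN. \<Sum>n\<le>NN. \<Sum>k\<le>NN. of_bool ((k,m) = ?q) * pd [(m,n),(n,k)] f J) = T NN x y f J"
  proof -
    have "(\<Sum>m\<le>NN. \<Sum>n\<le>NN. \<Sum>k\<le>NN. of_bool ((k,m) = ?q) * pd [(m,n),(n,k)] f J)
       = (\<Sum>k\<le>NN. \<Sum>m\<le>NN. of_bool ((k,m) = ?q) * (\<Sum>n\<le>NN. pd [(m,n),(n,k)] f J))"
    proof -
      have "(\<Sum>m\<le>NN. \<Sum>n\<le>NN. \<Sum>k\<le>NN. of_bool ((k,m) = ?q) * pd [(m,n),(n,k)] f J)
        = (\<Sum>m\<le>NN. \<Sum>k\<le>NN. \<Sum>n\<le>NN. of_bool ((k,m) = ?q) * pd [(m,n),(n,k)] f J)"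
        by (rule sum.cong[OF refl], rule sum.swap)
      also have "\<dots> = (\<Sum>k\<le>NN. \<Sum>m\<le>NN. \<Sum>n\<le>NN. of_bool ((k,m) = ?q) * pd [(m,n),(n,k)] f J)"
        by (rule sum.swap)
      finally show ?thesis by (simp add: sum_distrib_left)
    qed
    also have "\<dots> = T NN x y f J" unfolding T_def by (rule sum_delta_sq[OF xy])
    finally show ?thesis .
  qed
  finally show "D3 NN (\<lambda>J. J ?q * f J) J = J ?q * D3 NN f J + 3 * T NN x y f J" by simp
qed

lemma D_T: "f \<in> K \<Longrightarrow> D3 NN (T NN x y f) = T NN x y (D3 NN f)"
  unfolding T_def by (simp add: D_sum pd_in_K pd_D)

lemma Dpow_coordmult:
  assumes f: "f \<in> K" and xy: "x \<le> NN" "y \<le> NN"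
  shows "(D3 NN ^^ k) (\<lambda>J. J (x,y) * f J)
     = (\<lambda>J. J (x,y) * (D3 NN ^^ k) f J + 3 * of_nat k * T NN x y ((D3 NN ^^ (k - 1)) f) J)"
proof (induction k)
  case 0 then show ?case by simp
next
  case (Suc k)
  have K1: "(\<lambda>J. J (x,y) * (D3 NN ^^ k) f J) \<in> K" by (intro K_coordmult Dpow_K f)
  have K2: "(\<lambda>J. 3 * of_nat k * T NN x y ((D3 NN ^^ (k - 1)) f) J) \<in> K" by (intro K_cmult T_K Dpow_K f)
  have "(D3 NN ^^ Suc k) (\<lambda>J. J (x,y) * f J) = D3 NN (\<lambda>J. J (x,y) * (D3 NN ^^ k) f J + 3 * of_nat k * T NN x y ((D3 NN ^^ (k - 1)) f) J)"
    using Suc by simp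
  also have "\<dots> = (\<lambda>J. J (x,y) * (D3 NN ^^ Suc k) f J + 3 * T NN x y ((D3 NN ^^ k) f) J
       + 3 * of_nat k * T NN x y (D3 NN ((D3 NN ^^ (k - 1)) f)) J)"
    unfolding D_add[OF K1 K2] D_coordmult[OF Dpow_K[OF f] xy] D_cmult[OF T_K[OF Dpow_K[OF f]]] D_T[OF Dpow_K[OF f]]
    by simp
  also have "\<dots> = (\<lambda>J. J (x,y) * (D3 NN ^^ Suc k) f J + 3 * of_nat (Suc k) * T NN x y ((D3 NN ^^ (Suc k - 1)) f) J)"
  proof (cases k)
    case 0 then show ?thesis by simp
  next
    case (Suc j)
    then have "D3 NN ((D3 NN ^^ (k - 1)) f) = (D3 NN ^^ k) f" by simp
    then show ?thesis by (simp add: algebra_simps)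
  qed
  finally show ?case .
qed

definition Lop :: "nat \<Rightarrow> nat \<Rightarrow> nat \<Rightarrow> (source \<Rightarrow> complex) \<Rightarrow> source \<Rightarrow> complex" where
  "Lop NN a b f = (\<lambda>J. \<Sum>n\<le>NN. J (b,n) * pd [(a,n)] f J - J (n,a) * pd [(n,b)] f J)"

lemma Lop_K: "f \<in> K \<Longrightarrow> Lop NN a b f \<in> K"
  unfolding Lop_def by (intro K_sum K_diff K_coordmult pd_in_K) auto

lemma D_Lop:
  assumes f: "f \<in> K" and ab: "a \<le> NN" "b \<le> NN"
  shows "D3 NN (Lop NN a b f) = Lop NN a b (D3 NN f)"
proof
  fix J
  have Kn: "(\<lambda>J. J (b,n) * pd [(a,n)] f J - J (n,a) * pd [(n,b)] f J) \<in> K" for n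
    by (intro K_diff K_coordmult pd_in_K f)
  have "D3 NN (Lop NN a b f) J = (\<Sum>n\<le>NN. D3 NN (\<lambda>J. J (b,n) * pd [(a,n)] f J - J (n,a) * pd [(n,b)] f J) J)"
    unfolding Lop_def by (simp add: D_sum Kn)
  also have "\<dots> = (\<Sum>n\<le>NN. J (b,n) * D3 NN (pd [(a,n)] f) J + 3 * T NN b n (pd [(a,n)] f) J
       - (J (n,a) * D3 NN (pd [(n,b)] f) J + 3 * T NN n a (pd [(n,b)] f) J))"
  proof (intro sum.cong refl)
    fix n assume n: "n \<in> {..NN}"
    show "D3 NN (\<lambda>J. J (b,n) * pd [(a,n)] f J - J (n,a) * pd [(n,b)] f J) J = J (b,n) * D3 NN (pd [(a,n)] f) J + 3 * T NN b n (pd [(a,n)] f) J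
       - (J (n,a) * D3 NN (pd [(n,b)] f) J + 3 * T NN n a (pd [(n,b)] f) J)"
      using n ab by (simp add: D_diff K_coordmult pd_in_K f D_coordmult)
  qed
  also have "\<dots> = Lop NN a b (D3 NN f) J + 3 * ((\<Sum>n\<le>NN. T NN b n (pd [(a,n)] f) J) - (\<Sum>n\<le>NN. T NN n a (pd [(n,b)] f) J))"
    unfolding Lop_def by (simp add: pd_D f sum.distrib sum_subtractf algebra_simps sum_distrib_left)
  also have "(\<Sum>n\<le>NN. T NN b n (pd [(a,n)] f) J) = (\<Sum>n\<le>NN. T NN n a (pd [(n,b)] f) J)"
  proof -
    have "(\<Sum>n\<le>NN. T NN b n (pd [(a,n)] f) J) = (\<Sum>n\<le>NN. \<Sum>m\<le>NN. pd [(a,n),(n,m),(m,b)] f J)"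
    proof (intro sum.cong refl)
      fix n
      show "T NN b n (pd [(a,n)] f) J = (\<Sum>m\<le>NN. pd [(a,n),(n,m),(m,b)] f J)"
        unfolding T_def
      proof (intro sum.cong refl)
        fix m
        have "pd [(n,m),(m,b)] (pd [(a,n)] f) = pd [(n,m),(m,b),(a,n)] f" by (simp add: pd_append[symmetric])
        also have "\<dots> = pd [(a,n),(n,m),(m,b)] f" by (rule pd_perm[OF f]) (simp add: add_mset_commute)
        finally show "pd [(n,m),(m,b)] (pd [(a,n)] f) J = pd [(a,n),(n,m),(m,b)] f J" by simp
      qed
    qed
    also have "\<dots> = (\<Sum>m\<le>NN. \<Sum>n\<le>NN. pd [(a,n),(n,m),(m,b)] f J)" by (rule sum.swap)
    also have "\<dots> = (\<Sum>n\<le>NN. T NN n a (pd [(n,b)] f) J)"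
    proof (intro sum.cong refl)
      fix m
      show "(\<Sum>n\<le>NN. pd [(a,n),(n,m),(m,b)] f J) = T NN m a (pd [(m,b)] f) J"
        unfolding T_def
      proof (intro sum.cong refl)
        fix n
        show "pd [(a,n),(n,m),(m,b)] f J = pd [(a,n),(n,m)] (pd [(m,b)] f) J" by (simp add: pd_append[symmetric])
      qed
    qed
    finally show ?thesis .
  qed
  finally show "D3 NN (Lop NN a b f) J = Lop NN a b (D3 NN f) J" by simp
qed

lemma Dpow_Lop:
  assumes f: "f \<in> K" and ab: "a \<le> NN" "b \<le> NN"
  shows "(D3 NN ^^ k) (Lop NN a b f) = Lop NN a b ((D3 NN ^^ k) f)"
  by (induction k) (simp_all add: D_Lop[OF _ ab] Dpow_K f)


lemma K_div: "f \<in> K \<Longrightarrow> (\<lambda>J. f J / c) \<in> K"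
  using K_cmult[of f "inverse c"] by (simp add: divide_inverse mult.commute)

lemma pd_div: "f \<in> K \<Longrightarrow> pd [p] (\<lambda>J. f J / c) = (\<lambda>J. pd [p] f J / c)"
  using pd_cmult[of f p "inverse c"] by (simp add: divide_inverse mult.commute)

definition cQ :: "real \<Rightarrow> (nat \<Rightarrow> real) \<Rightarrow> nat \<Rightarrow> nat \<Rightarrow> complex" where
  "cQ V E x y = complex_of_real (V / (E x + E y))"

definition dQ :: "real \<Rightarrow> nat \<Rightarrow> nat \<Rightarrow> complex" where
  "dQ \<kappa> x y = (if x = y then complex_of_real \<kappa> else 0)"

lemma Q_K: "Qsrc NN V \<kappa> E \<in> K"
proof -
  have "Qsrc NN V \<kappa> E = (\<lambda>J. \<Sum>m\<le>NN. \<Sum>n\<le>NN.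
        complex_of_real (V/2) * (J (n,m) - (if n = m then complex_of_real \<kappa> else 0))
        * (J (m,n) - (if n = m then complex_of_real \<kappa> else 0)) / complex_of_real (E n + E m))"
    by (rule ext) (simp add: Qsrc_def)
  also have "\<dots> \<in> K" by (intro K_sum K_div K.intros K_diff) auto
  finally show ?thesis .
qed

lemma sum_delta_sq': "x \<le> (NN::nat) \<Longrightarrow> y \<le> NN \<Longrightarrow>
  (\<Sum>m\<le>NN. \<Sum>n\<le>NN. of_bool ((n,m) = (x,y)) * (h m n :: complex)) = h y x"
proof -
  assume xy: "x \<le> NN" "y \<le> NN"
  have "(\<Sum>m\<le>NN. \<Sum>n\<le>NN. of_bool ((n,m) = (x,y)) * h m n) = (\<Sum>n\<le>NN. \<Sum>m\<le>NN. of_bool ((n,m) = (x,y)) * h m n)"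
    by (rule sum.swap)
  also have "\<dots> = h y x" by (rule sum_delta_sq[OF xy])
  finally show ?thesis .
qed

lemma pd_Q:
  assumes xy: "x \<le> NN" "y \<le> NN"
  shows "pd [(x,y)] (Qsrc NN V \<kappa> E) = (\<lambda>J. cQ V E x y * (J (y,x) - dQ \<kappa> x y))"
proof
  fix J
  let ?c = "\<lambda>n m. complex_of_real (V/2) / complex_of_real (E n + E m)"
  let ?d = "\<lambda>n m. (if n = m then complex_of_real \<kappa> else 0)"
  have "Qsrc NN V \<kappa> E = (\<lambda>J. \<Sum>m\<le>NN. \<Sum>n\<le>NN. ?c n m * ((J (n,m) - ?d n m) * (J (m,n) - ?d n m)))"
    by (rule ext) (simp add: Qsrc_def mult.assoc)
  note Qeq = this
  have t: "pd [(x,y)] (\<lambda>J. c * ((J a - d) * (J b - d'))) = (\<lambda>J. c * (of_bool ((x,y) = a) * (J b - d') + (J a - d) * of_bool ((x,y) = b)))" for c d d' a b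
    by (simp add: pd_cmult pd_mult pd_diff pd_coord pd_const K_cmult Kmult K_diff Kcoord Kconst)
  have KK: "(\<lambda>J. ?c n m * ((J (n,m) - ?d n m) * (J (m,n) - ?d n m))) \<in> K" for n m
    by (intro K_cmult Kmult K_diff Kcoord Kconst)
  have KK2: "(\<lambda>J. \<Sum>n\<le>NN. ?c n m * ((J (n,m) - ?d n m) * (J (m,n) - ?d n m))) \<in> K" for m
    by (intro K_sum KK) auto
  have "pd [(x,y)] (Qsrc NN V \<kappa> E) J = (\<Sum>m\<le>NN. \<Sum>n\<le>NN. pd [(x,y)] (\<lambda>J. ?c n m * ((J (n,m) - ?d n m) * (J (m,n) - ?d n m))) J)"
    unfolding Qeq by (simp only: pd_sum[OF finite_atMost KK2] pd_sum[OF finite_atMost KK])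
  also have "\<dots> = (\<Sum>m\<le>NN. \<Sum>n\<le>NN. ?c n m * (
      of_bool ((x,y) = (n,m)) * (J (m,n) - ?d n m) + (J (n,m) - ?d n m) * of_bool ((x,y) = (m,n))))"
    by (simp only: t)
  also have "\<dots> = (\<Sum>m\<le>NN. \<Sum>n\<le>NN. of_bool ((n,m) = (x,y)) * (?c n m * (J (m,n) - ?d n m)))
       + (\<Sum>m\<le>NN. \<Sum>n\<le>NN. of_bool ((m,n) = (x,y)) * (?c n m * (J (n,m) - ?d n m)))"
  proof -
    have e: "?c n m * (of_bool ((x,y) = (n,m)) * (J (m,n) - ?d n m) + (J (n,m) - ?d n m) * of_bool ((x,y) = (m,n)))
      = of_bool ((n,m) = (x,y)) * (?c n m * (J (m,n) - ?d n m)) + of_bool ((m,n) = (x,y)) * (?c n m * (J (n,m) - ?d n m))" for n m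
      by (simp only: eq_commute[of "(x,y)"] distrib_left mult.commute mult.left_commute)
    show ?thesis by (simp only: e sum.distrib)
  qed
  also have "\<dots> = ?c x y * (J (y,x) - ?d x y) + ?c y x * (J (y,x) - ?d y x)"
    by (simp only: sum_delta_sq[OF xy] sum_delta_sq'[OF xy])
  also have "\<dots> = cQ V E x y * (J (y,x) - dQ \<kappa> x y)"
  proof -
    have c: "?c y x = ?c x y" by (simp add: add.commute)
    have d: "?d y x = ?d x y" by auto
    have "2 * ?c x y = complex_of_real (2 * (V/2) / (E x + E y))"
      by (simp only: of_real_mult of_real_divide of_real_numeral times_divide_eq_right)
    also have "\<dots> = cQ V E x y" unfolding cQ_def by simp
    finally have c2: "2 * ?c x y = cQ V E x y" .
    show ?thesis unfolding c d dQ_def c2[symmetric] by (simp add: algebra_simps)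
  qed
  finally show "pd [(x,y)] (Qsrc NN V \<kappa> E) J = cQ V E x y * (J (y,x) - dQ \<kappa> x y)" .
qed

definition g0 :: "nat \<Rightarrow> real \<Rightarrow> real \<Rightarrow> (nat \<Rightarrow> real) \<Rightarrow> source \<Rightarrow> complex" where
  "g0 NN V \<kappa> E = (\<lambda>J. exp (Qsrc NN V \<kappa> E J))"

lemma g0_K: "g0 NN V \<kappa> E \<in> K"
  unfolding g0_def using Kexp[OF Q_K[of NN V \<kappa> E]] by simp

lemma pd_g0:
  assumes "x \<le> NN" "y \<le> NN"
  shows "pd [(x,y)] (g0 NN V \<kappa> E) = (\<lambda>J. g0 NN V \<kappa> E J * (cQ V E x y * (J (y,x) - dQ \<kappa> x y)))"
  unfolding g0_def using pd_exp[OF Q_K[of NN V \<kappa> E], of "(x,y)"] pd_Q[OF assms, of V \<kappa> E] by simp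

lemma pd_g0_ne:
  assumes "a \<le> NN" "b \<le> NN" "a \<noteq> b"
  shows "pd [(a,b)] (g0 NN V \<kappa> E) = (\<lambda>J. cQ V E a b * J (b,a) * g0 NN V \<kappa> E J)"
  using pd_g0[OF assms(1,2)] assms(3) by (simp add: dQ_def algebra_simps)

lemma pd2_g0:
  assumes "a \<le> NN" "b \<le> NN" "n \<le> NN" "a \<noteq> b"
  shows "pd [(a,n),(n,b)] (g0 NN V \<kappa> E) = (\<lambda>J. g0 NN V \<kappa> E J * (cQ V E a n * (J (n,a) - dQ \<kappa> a n))
     * (cQ V E n b * (J (b,n) - dQ \<kappa> n b)))"
proof -
  have "pd [(a,n),(n,b)] (g0 NN V \<kappa> E) = pd [(a,n)] (pd [(n,b)] (g0 NN V \<kappa> E))"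
    by (simp only: pd_Cons[of "(a,n)" "[(n,b)]"])
  also have "\<dots> = pd [(a,n)] (\<lambda>J. g0 NN V \<kappa> E J * (cQ V E n b * (J (b,n) - dQ \<kappa> n b)))"
    using pd_g0[OF assms(3,2)] by simp
  also have "\<dots> = (\<lambda>J. g0 NN V \<kappa> E J * (cQ V E a n * (J (n,a) - dQ \<kappa> a n))
     * (cQ V E n b * (J (b,n) - dQ \<kappa> n b)))"
    using assms by (simp add: pd_mult g0_K K_cmult K_diff Kcoord Kconst pd_g0 pd_cmult pd_diff pd_coord pd_const)
  finally show ?thesis .
qed

lemma perm_alg:
  fixes s1 s2 V u w A B \<alpha> \<beta> :: complex
  assumes "s1 \<noteq> 0" "s2 \<noteq> 0" "\<alpha> * \<beta> = 0"
  shows "(s1 - s2) * ((V/s1) * (A - \<alpha>)) * ((V/s2) * (B - \<beta>)) + V * (B * ((V/s1) * (A - \<alpha>)) - A * ((V/s2) * (B - \<beta>)))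
     = V * (A * \<beta> * (V/s1) - \<alpha> * B * (V/s2))"
proof -
  have "\<alpha> * \<beta> * V * V * (s1 - s2) = 0" using assms(3) by simp
  then show ?thesis using assms(1,2) by (simp add: field_simps)
qed

lemma O4:
  assumes ab: "a \<le> NN" "b \<le> NN" "a \<noteq> b" and Epos: "\<And>n. E n > 0"
  shows "complex_of_real (E a - E b) * T NN b a (g0 NN V \<kappa> E) J = - complex_of_real V * Lop NN a b (g0 NN V \<kappa> E) J"
proof -
  let ?g = "g0 NN V \<kappa> E J"
  let ?s1 = "\<lambda>n. complex_of_real (E a + E n)"
  let ?s2 = "\<lambda>n. complex_of_real (E n + E b)"
  have nz1: "?s1 n \<noteq> 0" for n using Epos[of a] Epos[of n] by (metis add_pos_pos of_real_eq_0_iff less_irrefl)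
  have nz2: "?s2 n \<noteq> 0" for n using Epos[of b] Epos[of n] by (metis add_pos_pos of_real_eq_0_iff less_irrefl)
  have cq: "cQ V E x y = complex_of_real V / complex_of_real (E x + E y)" for x y unfolding cQ_def by simp
  have ab0: "dQ \<kappa> a n * dQ \<kappa> n b = 0" for n using ab(3) unfolding dQ_def by auto
  have "complex_of_real (E a - E b) * T NN b a (g0 NN V \<kappa> E) J + complex_of_real V * Lop NN a b (g0 NN V \<kappa> E) J
      = (\<Sum>n\<le>NN. ?g * (complex_of_real (E a - E b) * (cQ V E a n * (J (n,a) - dQ \<kappa> a n)) * (cQ V E n b * (J (b,n) - dQ \<kappa> n b))
         + complex_of_real V * (J (b,n) * (cQ V E a n * (J (n,a) - dQ \<kappa> a n)) - J (n,a) * (cQ V E n b * (J (b,n) - dQ \<kappa> n b)))))"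
    unfolding T_def Lop_def sum_distrib_left sum.distrib[symmetric]
  proof (intro sum.cong refl)
    fix n assume n: "n \<in> {..NN}"
    show "complex_of_real (E a - E b) * pd [(a,n),(n,b)] (g0 NN V \<kappa> E) J + complex_of_real V *
        (J (b,n) * pd [(a,n)] (g0 NN V \<kappa> E) J - J (n,a) * pd [(n,b)] (g0 NN V \<kappa> E) J) =
      ?g * (complex_of_real (E a - E b) * (cQ V E a n * (J (n,a) - dQ \<kappa> a n)) * (cQ V E n b * (J (b,n) - dQ \<kappa> n b))
         + complex_of_real V * (J (b,n) * (cQ V E a n * (J (n,a) - dQ \<kappa> a n)) - J (n,a) * (cQ V E n b * (J (b,n) - dQ \<kappa> n b))))"
      using n ab by (simp add: pd2_g0 pd_g0 algebra_simps del: of_real_diff)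
  qed
  also have "\<dots> = (\<Sum>n\<le>NN. ?g * complex_of_real V * (J (n,a) * dQ \<kappa> n b * (complex_of_real V / ?s1 n)
      - dQ \<kappa> a n * J (b,n) * (complex_of_real V / ?s2 n)))"
  proof (intro sum.cong refl)
    fix n
    have e: "complex_of_real (E a - E b) = ?s1 n - ?s2 n" by simp
    show "?g * (complex_of_real (E a - E b) * (cQ V E a n * (J (n,a) - dQ \<kappa> a n)) * (cQ V E n b * (J (b,n) - dQ \<kappa> n b))
         + complex_of_real V * (J (b,n) * (cQ V E a n * (J (n,a) - dQ \<kappa> a n)) - J (n,a) * (cQ V E n b * (J (b,n) - dQ \<kappa> n b))))
       = ?g * complex_of_real V * (J (n,a) * dQ \<kappa> n b * (complex_of_real V / ?s1 n)
      - dQ \<kappa> a n * J (b,n) * (complex_of_real V / ?s2 n))"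
      unfolding e cq unfolding perm_alg[OF nz1 nz2 ab0] by (simp only: mult.assoc)
  qed
  also have "\<dots> = ?g * complex_of_real V * ((\<Sum>n\<le>NN. J (n,a) * dQ \<kappa> n b * (complex_of_real V / ?s1 n))
      - (\<Sum>n\<le>NN. dQ \<kappa> a n * J (b,n) * (complex_of_real V / ?s2 n)))"
    by (simp only: sum_distrib_left[symmetric] sum_subtractf)
  also have "(\<Sum>n\<le>NN. J (n,a) * dQ \<kappa> n b * (complex_of_real V / ?s1 n)) = J (b,a) * complex_of_real \<kappa> * (complex_of_real V / ?s1 b)"
  proof -
    have "(\<Sum>n\<le>NN. J (n,a) * dQ \<kappa> n b * (complex_of_real V / ?s1 n)) = (\<Sum>n\<le>NN. if n = b then J (b,a) * complex_of_real \<kappa> * (complex_of_real V / ?s1 b) else 0)"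
      by (intro sum.cong refl) (auto simp: dQ_def)
    then show ?thesis using ab by simp
  qed
  also have "(\<Sum>n\<le>NN. dQ \<kappa> a n * J (b,n) * (complex_of_real V / ?s2 n)) = J (b,a) * complex_of_real \<kappa> * (complex_of_real V / ?s1 b)"
  proof -
    have "(\<Sum>n\<le>NN. dQ \<kappa> a n * J (b,n) * (complex_of_real V / ?s2 n)) = (\<Sum>n\<le>NN. if n = a then J (b,a) * complex_of_real \<kappa> * (complex_of_real V / ?s1 b) else 0)"
      by (intro sum.cong refl) (auto simp: dQ_def add.commute)
    then show ?thesis using ab by simp
  qed
  finally show ?thesis by (simp add: eq_neg_iff_add_eq_0)
qed


lemma pd_Dpow: "f \<in> K \<Longrightarrow> pd ps ((D3 NN ^^ k) f) = (D3 NN ^^ k) (pd ps f)"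
  by (induction k) (simp_all add: pd_D Dpow_K)

lemma Dpow_cmult: "f \<in> K \<Longrightarrow> (D3 NN ^^ k) (\<lambda>J. c * f J) = (\<lambda>J. c * (D3 NN ^^ k) f J)"
  by (induction k) (simp_all add: D_cmult Dpow_K)

lemma Dpow_T: "f \<in> K \<Longrightarrow> (D3 NN ^^ k) (T NN x y f) = T NN x y ((D3 NN ^^ k) f)"
  by (induction k) (simp_all add: D_T Dpow_K T_K)

lemma alg2: "(s::complex) \<noteq> 0 \<Longrightarrow> d \<noteq> 0 \<Longrightarrow> s * d * (V / s * (A * B - 3 * k * (V / d) * Y)) = V * d * A * B - 3 * k * V^2 * Y"
  by (simp add: field_simps power2_eq_square)

lemma Z_core:
  assumes ab: "a \<le> NN" "b \<le> NN" "a \<noteq> b" and Epos: "\<And>n. E n > 0" and Eab: "E a \<noteq> E b"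
  shows "complex_of_real (E a ^ 2 - E b ^ 2) * pd [(a,b)] ((D3 NN ^^ k) (g0 NN V \<kappa> E)) J
     = complex_of_real (V * (E a - E b)) * J (b,a) * (D3 NN ^^ k) (g0 NN V \<kappa> E) J
       - 3 * of_nat k * complex_of_real V ^ 2 * Lop NN a b ((D3 NN ^^ (k - 1)) (g0 NN V \<kappa> E)) J"
proof -
  let ?g = "g0 NN V \<kappa> E"
  have gK: "?g \<in> K" by (rule g0_K)
  have "pd [(a,b)] ((D3 NN ^^ k) ?g) = (D3 NN ^^ k) (\<lambda>J. cQ V E a b * (J (b,a) * ?g J))"
    using pd_Dpow[OF gK, of "[(a,b)]" k NN] pd_g0_ne[OF ab, of V \<kappa> E] by (simp add: mult.assoc)
  also have "\<dots> = (\<lambda>J. cQ V E a b * (J (b,a) * (D3 NN ^^ k) ?g J + 3 * of_nat k * T NN b a ((D3 NN ^^ (k - 1)) ?g) J))"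
    by (simp add: Dpow_cmult K_coordmult gK Dpow_coordmult[OF gK ab(2,1)])
  also have "T NN b a ((D3 NN ^^ (k - 1)) ?g) = (\<lambda>J. - (complex_of_real V / complex_of_real (E a - E b)) * Lop NN a b ((D3 NN ^^ (k - 1)) ?g) J)"
  proof -
    have ne: "complex_of_real (E a - E b) \<noteq> 0" using Eab by simp
    have "T NN b a ?g = (\<lambda>J. - (complex_of_real V / complex_of_real (E a - E b)) * Lop NN a b ?g J)"
    proof
      fix J
      show "T NN b a ?g J = - (complex_of_real V / complex_of_real (E a - E b)) * Lop NN a b ?g J"
        using O4[OF ab Epos, where V=V and \<kappa>=\<kappa> and J=J] ne by (simp add: field_simps)
    qed
    then have "(D3 NN ^^ (k-1)) (T NN b a ?g) = (D3 NN ^^ (k-1)) (\<lambda>J. - (complex_of_real V / complex_of_real (E a - E b)) * Lop NN a b ?g J)"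
      by simp
    then show ?thesis by (simp only: Dpow_T[OF gK] Dpow_cmult[OF Lop_K[OF gK]] Dpow_Lop[OF gK ab(1,2)])
  qed
  finally have e: "pd [(a,b)] ((D3 NN ^^ k) ?g) J = cQ V E a b * (J (b,a) * (D3 NN ^^ k) ?g J
      - 3 * of_nat k * (complex_of_real V / complex_of_real (E a - E b)) * Lop NN a b ((D3 NN ^^ (k - 1)) ?g) J)"
    by simp
  have ne: "complex_of_real (E a - E b) \<noteq> 0" using Eab by simp
  have ne2: "complex_of_real (E a + E b) \<noteq> 0" using Epos[of a] Epos[of b]
    by (metis add_pos_pos of_real_eq_0_iff less_irrefl)
  have sq: "complex_of_real (E a ^ 2 - E b ^ 2) = complex_of_real (E a + E b) * complex_of_real (E a - E b)"
    by (simp add: power2_eq_square algebra_simps)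
  show ?thesis unfolding e sq cQ_def of_real_divide of_real_mult
    using alg2[OF ne2 ne] by (simp add: mult.assoc)
qed




definition KF :: "(source \<Rightarrow> complex fps) \<Rightarrow> bool" where
  "KF F \<longleftrightarrow> (\<forall>n. (\<lambda>J. F J $ n) \<in> K)"

definition dF :: "nat \<times> nat \<Rightarrow> (source \<Rightarrow> complex fps) \<Rightarrow> source \<Rightarrow> complex fps" where
  "dF p F J = Abs_fps (\<lambda>n. pd [p] (\<lambda>J'. F J' $ n) J)"

lemma dF_nth[simp]: "dF p F J $ n = pd [p] (\<lambda>J'. F J' $ n) J"
  by (simp add: dF_def)

lemma KFD: "KF F \<Longrightarrow> (\<lambda>J. F J $ n) \<in> K" by (simp add: KF_def)

lemma KF_mult: "KF F \<Longrightarrow> KF G \<Longrightarrow> KF (\<lambda>J. F J * G J)"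
  unfolding KF_def fps_mult_nth by (auto intro!: K_sum Kmult)

lemma KF_add: "KF F \<Longrightarrow> KF G \<Longrightarrow> KF (\<lambda>J. F J + G J)"
  unfolding KF_def by (auto intro!: Kadd)

lemma KF_diff: "KF F \<Longrightarrow> KF G \<Longrightarrow> KF (\<lambda>J. F J - G J)"
  unfolding KF_def by (auto intro!: K_diff)

lemma KF_constF: "KF (\<lambda>J. C)"
  unfolding KF_def by (auto intro!: Kconst)

lemma KF_fconst: "f \<in> K \<Longrightarrow> KF (\<lambda>J. fps_const (f J))"
proof -
  assume f: "f \<in> K"
  have "(\<lambda>J. fps_const (f J) $ n) \<in> K" for n
    using f by (cases "n = 0") (auto intro: Kconst)
  then show ?thesis unfolding KF_def by blast
qed

lemma KF_pow: "KF F \<Longrightarrow> KF (\<lambda>J. F J ^ i)"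
  by (induction i) (auto intro: KF_mult KF_constF)

lemma KF_deriv: "KF F \<Longrightarrow> KF (\<lambda>J. fps_deriv (F J))"
  unfolding KF_def by (auto intro!: K_cmult)

lemma KF_sum: "finite A \<Longrightarrow> (\<And>i. i \<in> A \<Longrightarrow> KF (f i)) \<Longrightarrow> KF (\<lambda>J. \<Sum>i\<in>A. f i J)"
  unfolding KF_def fps_sum_nth by (auto intro!: K_sum)

lemma KF_X: "KF F \<Longrightarrow> KF (\<lambda>J. fps_X * F J)"
proof -
  assume F: "KF F"
  have "(\<lambda>J. (fps_X * F J) $ n) \<in> K" for n
    using F by (cases "n = 0") (auto simp: fps_X_mult_nth KF_def intro: Kconst)
  then show ?thesis unfolding KF_def by blast
qed

lemma dF_mult: "KF F \<Longrightarrow> KF G \<Longrightarrow> dF p (\<lambda>J. F J * G J) J = dF p F J * G J + F J * dF p G J"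
proof (rule fps_ext)
  fix n assume F: "KF F" and G: "KF G"
  have "pd [p] (\<lambda>J. \<Sum>i=0..n. F J $ i * G J $ (n - i)) J = (\<Sum>i=0..n. pd [p] (\<lambda>J. F J $ i * G J $ (n - i)) J)"
    using pd_sum[of "{0..n}" "\<lambda>i J. F J $ i * G J $ (n - i)" p] F G by (simp add: Kmult KFD)
  also have "\<dots> = (\<Sum>i=0..n. pd [p] (\<lambda>J. F J $ i) J * G J $ (n - i) + F J $ i * pd [p] (\<lambda>J. G J $ (n - i)) J)"
    using F G by (simp add: pd_mult KFD)
  finally show "dF p (\<lambda>J. F J * G J) J $ n = (dF p F J * G J + F J * dF p G J) $ n"
    by (simp add: fps_mult_nth sum.distrib)
qed

lemma dF_add: "KF F \<Longrightarrow> KF G \<Longrightarrow> dF p (\<lambda>J. F J + G J) J = dF p F J + dF p G J"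
  by (rule fps_ext) (simp add: pd_add KFD)

lemma dF_diff: "KF F \<Longrightarrow> KF G \<Longrightarrow> dF p (\<lambda>J. F J - G J) J = dF p F J - dF p G J"
  by (rule fps_ext) (simp add: pd_diff KFD)

lemma dF_constF: "dF p (\<lambda>J. C) J = 0"
  by (rule fps_ext) (simp add: pd_const)

lemma dF_deriv: "KF F \<Longrightarrow> dF p (\<lambda>J. fps_deriv (F J)) J = fps_deriv (dF p F J)"
  by (rule fps_ext) (simp add: pd_cmult KFD)

lemma dF_fconst: "f \<in> K \<Longrightarrow> dF p (\<lambda>J. fps_const (f J)) J = fps_const (pd [p] f J)"
proof (rule fps_ext)
  fix n assume f: "f \<in> K"
  show "dF p (\<lambda>J. fps_const (f J)) J $ n = fps_const (pd [p] f J) $ n"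
    by (cases "n = 0") (simp_all add: f pd_const)
qed

lemma fps_ode_zero:
  fixes S A :: "complex fps"
  assumes "fps_deriv S = A * S" "S $ 0 = 0"
  shows "S = 0"
proof -
  have "S $ n = 0" for n
  proof (induction n rule: less_induct)
    case (less n)
    show ?case
    proof (cases n)
      case 0 then show ?thesis using assms(2) by simp
    next
      case (Suc m)
      have "of_nat (m + 1) * S $ (m + 1) = (A * S) $ m" using assms(1) fps_deriv_nth[of S m] by simp
      also have "\<dots> = (\<Sum>i=0..m. A $ i * S $ (m - i))" by (simp add: fps_mult_nth)
      also have "\<dots> = 0" using less Suc by (intro sum.neutral) auto
      finally have "(1 + of_nat m) * S $ Suc m = 0" by simp
      moreover have "(1 + of_nat m :: complex) \<noteq> 0"
        by (metis of_nat_Suc of_nat_eq_0_iff nat.distinct(1) add.commute)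
      ultimately show ?thesis using Suc by simp
    qed
  qed
  then show ?thesis by (intro fps_ext) simp
qed



definition Lf :: "(source \<Rightarrow> complex fps) \<Rightarrow> (source \<Rightarrow> complex) \<Rightarrow> source \<Rightarrow> complex fps" where
  "Lf R l0 J = fps_const (l0 J) + (fps_ln 1 oo (R J / fps_const (R J $ 0) - 1))"

lemma div_fconst: "(c::complex) \<noteq> 0 \<Longrightarrow> F / fps_const c = F * fps_const (inverse c)"
  by (simp add: fps_divide_unit fps_const_inverse)

locale logsetup =
  fixes R :: "source \<Rightarrow> complex fps" and l0 :: "source \<Rightarrow> complex"
  assumes KR: "KF R" and Kl0: "l0 \<in> K" and R0: "\<And>J. R J $ 0 = exp (l0 J)"
begin

definition gg where "gg J = R J * fps_const (exp (- l0 J)) - 1"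

lemma gg_eq: "R J / fps_const (R J $ 0) - 1 = gg J"
  unfolding gg_def R0 by (simp add: div_fconst exp_minus)

lemma gg0: "gg J $ 0 = 0"
  unfolding gg_def using R0[of J] by (simp add: exp_minus)

lemma KF_gg: "KF gg"
proof -
  have "KF (\<lambda>J. R J * fps_const (exp (- l0 J)) - 1)"
    by (intro KF_diff KF_mult KR KF_fconst KF_constF Kexp K_uminus Kl0)
  then show ?thesis unfolding gg_def[abs_def] .
qed

lemma Lf_eq: "Lf R l0 J = fps_const (l0 J) + (fps_ln 1 oo gg J)"
  unfolding Lf_def gg_eq ..

lemma KF_Lf: "KF (Lf R l0)"
proof -
  have "(\<lambda>J. (fps_ln 1 oo gg J) $ n) \<in> K" for n
    unfolding fps_compose_nth
    using KF_pow[OF KF_gg] by (intro K_sum K_cmult) (auto simp: KF_def)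
  then have "KF (\<lambda>J. fps_ln 1 oo gg J)" unfolding KF_def by blast
  then have "KF (\<lambda>J. fps_const (l0 J) + (fps_ln 1 oo gg J))" by (intro KF_add KF_fconst Kl0)
  then show ?thesis unfolding Lf_eq[abs_def] .
qed

lemma Lf0: "Lf R l0 J $ 0 = l0 J"
  unfolding Lf_eq by simp

lemma Lf_deriv: "R J * fps_deriv (Lf R l0 J) = fps_deriv (R J)"
proof -
  let ?g = "gg J" and ?e = "exp (l0 J)"
  have "fps_deriv (Lf R l0 J) = (fps_deriv (fps_ln 1) oo ?g) * fps_deriv ?g"
    unfolding Lf_eq by (simp add: fps_compose_deriv gg0)
  also have "fps_deriv (fps_ln 1) oo ?g = inverse (1 + ?g)"
  proof -
    have "fps_deriv (fps_ln (1::complex)) = inverse (1 + fps_X)" by (simp add: fps_ln_deriv)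
    moreover have "inverse (1 + fps_X) oo ?g = inverse ((1 + fps_X) oo ?g)"
      by (rule fps_inverse_compose) (simp_all add: gg0)
    moreover have "(1 + fps_X) oo ?g = 1 + ?g" by (simp add: fps_compose_add_distrib gg0)
    ultimately show ?thesis by simp
  qed
  finally have d: "fps_deriv (Lf R l0 J) = inverse (1 + ?g) * fps_deriv ?g" .
  have RR: "R J = fps_const ?e * (1 + ?g)"
  proof -
    have "fps_const ?e * (1 + ?g) = fps_const ?e * (R J * fps_const (exp (- l0 J)))" unfolding gg_def by simp
    also have "\<dots> = R J * (fps_const ?e * fps_const (exp (- l0 J)))" by (simp only: ac_simps)
    also have "fps_const ?e * fps_const (exp (- l0 J)) = 1"
      by (simp only: fps_const_mult exp_minus_inverse fps_const_1_eq_1)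
    finally show ?thesis by simp
  qed
  have inv: "(1 + ?g) * inverse (1 + ?g) = 1" by (rule inverse_mult_eq_1') (simp add: gg0)
  have "R J * fps_deriv (Lf R l0 J) = fps_const ?e * ((1 + ?g) * inverse (1 + ?g)) * fps_deriv ?g"
    unfolding d by (subst RR) (simp add: mult.assoc)
  also have "\<dots> = fps_deriv (R J)"
  proof -
    have "fps_deriv (R J) = fps_deriv (fps_const ?e * (1 + ?g))" using RR by (rule arg_cong)
    then show ?thesis unfolding inv by simp
  qed
  finally show ?thesis .
qed

lemma Lf_dF: "R J * dF p (Lf R l0) J = dF p R J"
proof -
  let ?L = "Lf R l0"
  have KL: "KF ?L" by (rule KF_Lf)
  have I: "(\<lambda>J. R J * fps_deriv (?L J)) = (\<lambda>J. fps_deriv (R J))" using Lf_deriv by blast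
  have "dF p (\<lambda>J. R J * fps_deriv (?L J)) J = dF p (\<lambda>J. fps_deriv (R J)) J" unfolding I ..
  then have I2: "dF p R J * fps_deriv (?L J) + R J * fps_deriv (dF p ?L J) = fps_deriv (dF p R J)"
    using KL KR by (simp add: dF_mult KF_deriv dF_deriv)
  define S where "S = R J * dF p ?L J - dF p R J"
  have "fps_deriv S = fps_deriv (R J) * dF p ?L J + R J * fps_deriv (dF p ?L J) - fps_deriv (dF p R J)"
    unfolding S_def by simp
  also have "\<dots> = fps_deriv (R J) * dF p ?L J - dF p R J * fps_deriv (?L J)"
    using I2 by (simp add: algebra_simps)
  also have "\<dots> = fps_deriv (?L J) * S"
    unfolding S_def Lf_deriv[of J, symmetric] by (simp add: algebra_simps)
  finally have dS: "fps_deriv S = fps_deriv (?L J) * S" .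
  have S0: "S $ 0 = 0"
  proof -
    have a: "(\<lambda>J. ?L J $ 0) = l0" using Lf0 by (intro ext) simp
    have b: "(\<lambda>J. R J $ 0) = (\<lambda>J. exp (l0 J))" using R0 by (intro ext) simp
    show ?thesis unfolding S_def using Kl0 by (simp add: a b pd_exp R0)
  qed
  have "S = 0" by (rule fps_ode_zero[OF dS S0])
  then show ?thesis unfolding S_def by simp
qed

end



definition zc :: "real \<Rightarrow> nat \<Rightarrow> complex" where
  "zc V k = complex_of_real ((- 1 / (3 * V^2)) ^ k / fact k)"

definition LF :: "nat \<Rightarrow> nat \<Rightarrow> nat \<Rightarrow> (source \<Rightarrow> complex fps) \<Rightarrow> source \<Rightarrow> complex fps" where
  "LF NN a b F J = (\<Sum>n\<le>NN. fps_const (J (b,n)) * dF (a,n) F J - fps_const (J (n,a)) * dF (n,b) F J)"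

locale model =
  fixes NN :: nat and V \<kappa> :: real and E :: "nat \<Rightarrow> real"
  assumes Vpos: "V > 0" and Epos: "\<And>n. E n > 0"
begin

abbreviation "Zf \<equiv> Zser NN V \<kappa> E"
abbreviation "gz \<equiv> g0 NN V \<kappa> E"

lemma Zs_nth: "Zf J $ k = zc V k * (D3 NN ^^ k) gz J"
proof -
  have "(\<lambda>J'. exp (Qsrc NN V \<kappa> E J')) = gz" unfolding g0_def ..
  then show ?thesis unfolding Zser_def zc_def by simp
qed

lemma zf_fun: "(\<lambda>J. Zf J $ k) = (\<lambda>J. zc V k * (D3 NN ^^ k) gz J)"
  using Zs_nth by (intro ext) simp

lemma KF_Z: "KF Zf"
  unfolding KF_def zf_fun by (intro allI K_cmult Dpow_K g0_K)

lemma Z0: "Zf J $ 0 = exp (Qsrc NN V \<kappa> E J)"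
  by (simp add: Zs_nth zc_def g0_def)

lemma zc0[simp]: "zc V 0 = 1" by (simp add: zc_def)

lemma zc_rel: "k \<ge> 1 \<Longrightarrow> zc V k * (3 * of_nat k * complex_of_real V ^ 2) = - zc V (k - 1)"
proof -
  assume k: "k \<ge> 1"
  then obtain j where j: "k = Suc j" by (cases k) auto
  have V: "V \<noteq> 0" using Vpos by simp
  define c where "c = - 1 / (3 * V^2)"
  have c3: "c * (3 * V^2) = -1" unfolding c_def using V by simp
  have f: "(fact (Suc j) :: real) = real (Suc j) * fact j" by simp
  have nz: "real (Suc j) \<noteq> 0" "(fact j :: real) \<noteq> 0" by auto
  have "c ^ Suc j / fact (Suc j) * (3 * real (Suc j) * V ^ 2) = c^j / fact j * (c * (3 * V^2))"
    unfolding f using nz by (simp add: field_simps del: of_nat_Suc)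
  then have r: "c ^ Suc j / fact (Suc j) * (3 * real (Suc j) * V ^ 2) = - (c^j / fact j)" using c3 by simp
  have "complex_of_real (c ^ Suc j / fact (Suc j) * (3 * real (Suc j) * V ^ 2)) = complex_of_real (- (c^j / fact j))"
    unfolding r ..
  then show ?thesis unfolding zc_def j c_def[symmetric] by simp
qed

lemma Zid:
  assumes ab: "a \<le> NN" "b \<le> NN" "a \<noteq> b" and Eab: "E a \<noteq> E b"
  shows "fps_const (complex_of_real (E a ^ 2 - E b ^ 2)) * dF (a,b) Zf J
     = fps_const (complex_of_real (V * (E a - E b)) * J (b,a)) * Zf J + fps_X * LF NN a b Zf J"
proof (rule fps_ext)
  fix k
  have gK: "gz \<in> K" by (rule g0_K)
  have pdz: "pd [p] (\<lambda>J. Zf J $ k) J = zc V k * pd [p] ((D3 NN ^^ k) gz) J" for p k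
    unfolding zf_fun by (simp add: pd_cmult Dpow_K gK)
  have core: "complex_of_real (E a ^ 2 - E b ^ 2) * pd [(a,b)] ((D3 NN ^^ k) gz) J
     = complex_of_real (V * (E a - E b)) * J (b,a) * (D3 NN ^^ k) gz J
       - 3 * of_nat k * complex_of_real V ^ 2 * Lop NN a b ((D3 NN ^^ (k - 1)) gz) J"
    by (rule Z_core[OF ab Epos Eab])
  have LFk: "LF NN a b Zf J $ j = zc V j * Lop NN a b ((D3 NN ^^ j) gz) J" for j
    unfolding LF_def Lop_def by (simp add: fps_sum_nth pdz sum_distrib_left algebra_simps)
  show "(fps_const (complex_of_real (E a ^ 2 - E b ^ 2)) * dF (a,b) Zf J) $ k
     = (fps_const (complex_of_real (V * (E a - E b)) * J (b,a)) * Zf J + fps_X * LF NN a b Zf J) $ k"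
  proof (cases "k = 0")
    case True
    then show ?thesis using core by (simp add: pdz Zs_nth fps_X_mult_nth algebra_simps)
  next
    case False
    then have k1: "k \<ge> 1" by simp
    have "(fps_const (complex_of_real (E a ^ 2 - E b ^ 2)) * dF (a,b) Zf J) $ k
       = zc V k * (complex_of_real (E a ^ 2 - E b ^ 2) * pd [(a,b)] ((D3 NN ^^ k) gz) J)"
      by (simp add: pdz)
    also have "\<dots> = zc V k * (complex_of_real (V * (E a - E b)) * J (b,a) * (D3 NN ^^ k) gz J)
        - (zc V k * (3 * of_nat k * complex_of_real V ^ 2)) * Lop NN a b ((D3 NN ^^ (k - 1)) gz) J"
      unfolding core by (simp add: algebra_simps)
    also have "\<dots> = (fps_const (complex_of_real (V * (E a - E b)) * J (b,a)) * Zf J + fps_X * LF NN a b Zf J) $ k"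
      unfolding zc_rel[OF k1] using False by (simp add: Zs_nth fps_X_mult_nth LFk algebra_simps)
    finally show ?thesis .
  qed
qed

end



lemma pd_local:
  assumes U: "\<And>J p. J \<in> U \<Longrightarrow> open {t. J(p := t) \<in> U}" and fg: "\<And>J. J \<in> U \<Longrightarrow> f J = g J"
  shows "J \<in> U \<Longrightarrow> pd ps f J = pd ps g J"
proof (induction ps arbitrary: J)
  case Nil then show ?case using fg by simp
next
  case (Cons p ps)
  have ev: "eventually (\<lambda>t. pd ps f (J(p := t)) = pd ps g (J(p := t))) (nhds (J p))"
  proof -
    have "J p \<in> {t. J(p := t) \<in> U}" using Cons.prems by simp
    then have "eventually (\<lambda>t. t \<in> {t. J(p := t) \<in> U}) (nhds (J p))"
      by (rule eventually_nhds_in_open[OF U[OF Cons.prems, of p]])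
    then show ?thesis by eventually_elim (use Cons.IH in simp)
  qed
  show ?case unfolding pd.simps(2) by (rule deriv_cong_ev[OF ev refl])
qed

lemma K_cont_line: "f \<in> K \<Longrightarrow> continuous_on UNIV (\<lambda>t. f (J(p := t)))"
proof -
  assume f: "f \<in> K"
  have "isCont (\<lambda>t. f (J(p := t))) t" for t
  proof -
    have "((\<lambda>s. f ((J(p := t))(p := s))) has_field_derivative pd [p] f (J(p := t))) (at ((J(p := t)) p))"
      by (rule Kd[OF f])
    then show ?thesis by (simp add: DERIV_isCont)
  qed
  then show ?thesis by (simp add: continuous_on_eq_continuous_at)
qed

lemma open_line_U:
  assumes "l \<in> K"
  shows "open {t. (J(p := t)) \<in> {J. \<bar>Im (l J)\<bar> < pi}}"
proof -
  have "continuous_on UNIV (\<lambda>t. \<bar>Im (l (J(p := t)))\<bar>)"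
    by (intro continuous_intros K_cont_line assms)
  then have "open {t. \<bar>Im (l (J(p := t)))\<bar> < pi}"
    by (rule open_Collect_less) (rule continuous_on_const)
  then show ?thesis by simp
qed

context model
begin

definition Rf where "Rf J = Zf J / Zf (\<lambda>_. 0)"
definition C0 where "C0 = inverse (Zf (\<lambda>_. 0))"
definition l0 where "l0 J = Qsrc NN V \<kappa> E J - Qsrc NN V \<kappa> E (\<lambda>_. 0)"

lemma Zne: "Zf J $ 0 \<noteq> 0" by (simp add: Z0)

lemma Rf_eq: "Rf J = Zf J * C0"
  unfolding Rf_def C0_def by (rule fps_divide_unit) (rule Zne)

lemma KF_Rf: "KF Rf"
proof -
  have "KF (\<lambda>J. Zf J * C0)" by (intro KF_mult KF_Z KF_constF)
  then show ?thesis using Rf_eq by (simp add: fun_eq_iff[symmetric] Rf_eq[abs_def])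
qed

lemma l0_K: "l0 \<in> K"
proof -
  have "(\<lambda>J. Qsrc NN V \<kappa> E J - Qsrc NN V \<kappa> E (\<lambda>_. 0)) \<in> K" by (intro K_diff Q_K[unfolded eta_contract_eq] Kconst)
  then show ?thesis unfolding l0_def[abs_def] .
qed

lemma Rf0: "Rf J $ 0 = exp (l0 J)"
proof -
  have "(inverse (Zf (\<lambda>_. 0)) * Zf (\<lambda>_. 0)) $ 0 = 1" using inverse_mult_eq_1[OF Zne] by simp
  then have c: "C0 $ 0 = inverse (exp (Qsrc NN V \<kappa> E (\<lambda>_. 0)))" unfolding C0_def by (simp add: Z0 field_simps)
  show ?thesis unfolding Rf_eq l0_def by (simp add: c Z0 exp_diff divide_inverse)
qed

sublocale LS: logsetup Rf l0
  by unfold_locales (auto simp: KF_Rf l0_K Rf0)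

abbreviation "LL \<equiv> Lf Rf l0"

lemma RI: "dF p Zf J * C0 = Rf J * dF p LL J"
proof -
  have "Rf = (\<lambda>J. Zf J * C0)" using Rf_eq by (intro ext) simp
  then have "dF p Rf J = dF p Zf J * C0"
    by (simp add: dF_mult KF_Z KF_constF dF_constF)
  then show ?thesis using LS.Lf_dF[of J p] by simp
qed

lemma LF_C0: "LF NN a b Zf J * C0 = Rf J * LF NN a b LL J"
  unfolding LF_def sum_distrib_right sum_distrib_left
proof (intro sum.cong refl)
  fix n
  show "(fps_const (J (b, n)) * dF (a, n) Zf J - fps_const (J (n, a)) * dF (n, b) Zf J) * C0 =
        Rf J * (fps_const (J (b, n)) * dF (a, n) LL J - fps_const (J (n, a)) * dF (n, b) LL J)"
    by (simp add: algebra_simps RI[symmetric])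
qed

lemma WIfps:
  assumes ab: "a \<le> NN" "b \<le> NN" "a \<noteq> b" and Eab: "E a \<noteq> E b"
  shows "fps_const (complex_of_real (E a ^ 2 - E b ^ 2)) * dF (a,b) LL J
     = fps_const (complex_of_real (V * (E a - E b)) * J (b,a)) + fps_X * LF NN a b LL J"
proof -
  let ?x = "fps_const (complex_of_real (E a ^ 2 - E b ^ 2))"
  let ?c = "fps_const (complex_of_real (V * (E a - E b)) * J (b,a))"
  have "?x * dF (a,b) Zf J * C0 = (?c * Zf J + fps_X * LF NN a b Zf J) * C0"
    using Zid[OF ab Eab, of J] by simp
  then have "?x * (dF (a,b) Zf J * C0) = ?c * (Zf J * C0) + fps_X * (LF NN a b Zf J * C0)"
    by (simp add: algebra_simps)
  then have "?x * (Rf J * dF (a,b) LL J) = ?c * Rf J + fps_X * (Rf J * LF NN a b LL J)"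
    unfolding RI LF_C0 Rf_eq[symmetric] .
  then have "Rf J * (?x * dF (a,b) LL J - (?c + fps_X * LF NN a b LL J)) = 0"
    by (simp add: algebra_simps)
  moreover have "Rf J \<noteq> 0"
  proof
    assume "Rf J = 0"
    then have "Rf J $ 0 = 0" by simp
    then show False using Rf0 by simp
  qed
  ultimately show ?thesis by simp
qed

lemma LF_nth: "LF NN a b LL J $ j = Lop NN a b (\<lambda>J. LL J $ j) J"
  unfolding LF_def Lop_def by (simp add: fps_sum_nth)

lemma WIk:
  assumes ab: "a \<le> NN" "b \<le> NN" "a \<noteq> b" and Eab: "E a \<noteq> E b"
  shows "complex_of_real (E a ^ 2 - E b ^ 2) * pd [(a,b)] (\<lambda>J. LL J $ k) J
     = (if k = 0 then complex_of_real (V * (E a - E b)) * J (b,a) else Lop NN a b (\<lambda>J. LL J $ (k - 1)) J)"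
  using arg_cong[OF WIfps[OF ab Eab, of J], of "\<lambda>F. F $ k"]
  by (cases "k = 0") (simp_all add: fps_X_mult_nth LF_nth)

end



lemma pick_in:
  assumes h: "h \<in> K" and q: "q \<notin> set ps1" "q \<notin> set ps2"
  shows "pd (ps1 @ q # ps2) (\<lambda>J. J q * h J) (\<lambda>_. 0) = pd (ps1 @ ps2) h (\<lambda>_. 0)"
proof -
  have "pd (ps1 @ q # ps2) (\<lambda>J. J q * h J) = pd (q # ps1 @ ps2) (\<lambda>J. J q * h J)"
    by (rule pd_move_front) (intro K_coordmult h)
  also have "\<dots> = pd [q] (pd (ps1 @ ps2) (\<lambda>J. J q * h J))" by (rule pd_Cons)
  also have "pd (ps1 @ ps2) (\<lambda>J. J q * h J) = (\<lambda>J. J q * pd (ps1 @ ps2) h J)"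
    using q by (intro pd_coordmult_notin h) auto
  finally show ?thesis by (simp add: pd1_coordmult pd_in_K h)
qed

lemma pick_out:
  assumes h: "h \<in> K" and q: "q \<notin> set ps"
  shows "pd ps (\<lambda>J. J q * h J) (\<lambda>_. 0) = 0"
  using pd_coordmult_notin[OF h q] by simp

lemma cyc_Cons2: "cycle_idx (a1 # a2 # bs) = (a1, a2) # zip (a2 # bs) (bs @ [a1])"
  unfolding cycle_idx_def by simp

lemma cyc_Cons: "cycle_idx (a # bs) = zip (a # bs) (bs @ [a])"
  unfolding cycle_idx_def by simp

lemma zip_snoc_split: "length xs = length ys \<Longrightarrow> zip (xs @ [x]) (ys @ [y]) = zip xs ys @ [(x,y)]"
  by simp

context model
begin

definition Pk where "Pk as k = pd (cycle_idx as) (\<lambda>J. LL J $ k) (\<lambda>_. 0)"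

lemma lk_K: "(\<lambda>J. LL J $ k) \<in> K" using LS.KF_Lf by (simp add: KF_def)

lemma Pk_rec:
  assumes dist: "distinct (a1 # a2 # bs)" and bnd: "set (a1 # a2 # bs) \<subseteq> {..NN}" and Eab: "E a1 \<noteq> E a2"
  shows "complex_of_real (E a1 ^ 2 - E a2 ^ 2) * Pk (a1 # a2 # bs) k
     = (if k = 0 then (if bs = [] then complex_of_real (V * (E a1 - E a2)) else 0)
        else Pk (a1 # bs) (k - 1) - Pk (a2 # bs) (k - 1))"
proof -
  define ys where "ys = bs @ [a1]"
  define rest where "rest = zip (a2 # bs) ys"
  define a3 where "a3 = hd ys"
  define z where "z = last (a2 # bs)"
  define xs' where "xs' = butlast (a2 # bs)"
  have ab: "a1 \<le> NN" "a2 \<le> NN" "a1 \<noteq> a2" using dist bnd by auto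
  have a2bs: "a2 \<notin> set bs" "a1 \<notin> set bs" using dist by auto
  have ysne: "ys = a3 # tl ys" unfolding ys_def a3_def by (cases bs) auto
  have rest1: "rest = (a2, a3) # zip bs (tl ys)" unfolding rest_def by (subst ysne) simp
  have xsz: "a2 # bs = xs' @ [z]" unfolding xs'_def z_def by simp
  have lxs: "length xs' = length bs" unfolding xs'_def by simp
  have rest2: "rest = zip xs' bs @ [(z, a1)]" unfolding rest_def ys_def xsz using lxs by simp
  have a3N: "a3 \<le> NN" unfolding a3_def ys_def using bnd by (cases bs) auto
  have zN: "z \<le> NN" unfolding z_def using bnd by (cases bs) (auto dest: last_in_set)
  let ?l = "\<lambda>k J. LL J $ k"
  have cyc1: "cycle_idx (a1 # bs) = (a1, a3) # zip bs (tl ys)"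
    unfolding cyc_Cons ys_def[symmetric] by (subst ysne) simp
  have cyc2: "cycle_idx (a2 # bs) = zip xs' bs @ [(z, a2)]"
    unfolding cyc_Cons by (subst xsz) (simp add: lxs)
  have "Pk (a1 # a2 # bs) k = pd (rest @ [(a1,a2)]) (?l k) (\<lambda>_. 0)"
    unfolding Pk_def cyc_Cons2 rest_def[symmetric] ys_def[symmetric]
    by (rule fun_cong[OF pd_perm[OF lk_K]]) simp
  also have "\<dots> = pd rest (pd [(a1,a2)] (?l k)) (\<lambda>_. 0)" by (simp add: pd_append)
  finally have P1: "complex_of_real (E a1 ^ 2 - E a2 ^ 2) * Pk (a1 # a2 # bs) k
     = pd rest (\<lambda>J. complex_of_real (E a1 ^ 2 - E a2 ^ 2) * pd [(a1,a2)] (?l k) J) (\<lambda>_. 0)"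
    by (simp add: pdl_cmult pd_in_K lk_K)
  have WI: "(\<lambda>J. complex_of_real (E a1 ^ 2 - E a2 ^ 2) * pd [(a1,a2)] (?l k) J)
     = (\<lambda>J. if k = 0 then complex_of_real (V * (E a1 - E a2)) * J (a2,a1) else Lop NN a1 a2 (?l (k - 1)) J)"
    using WIk[OF ab Eab] by (intro ext) simp
  show ?thesis
  proof (cases "k = 0")
    case True
    have "pd rest (\<lambda>J. J (a2,a1) * complex_of_real (V * (E a1 - E a2))) (\<lambda>_. 0)
        = (if bs = [] then complex_of_real (V * (E a1 - E a2)) else 0)"
    proof (cases "bs = []")
      case True
      then have "rest = [] @ (a2,a1) # []" unfolding rest_def ys_def by simp
      then show ?thesis using True pick_in[OF Kconst, of "(a2,a1)" "[]" "[]"] by simp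
    next
      case False
      then have "a3 \<in> set bs" unfolding a3_def ys_def by (cases bs) auto
      then have "(a2,a1) \<notin> set rest" unfolding rest1 using a2bs by (auto dest: set_zip_leftD)
      then show ?thesis using False pick_out[OF Kconst] by simp
    qed
    then show ?thesis using True unfolding P1 WI by (simp add: mult.commute)
  next
    case False
    let ?m = "k - 1"
    have KA: "(\<lambda>J. J (a2,n) * pd [(a1,n)] (?l ?m) J) \<in> K" "(\<lambda>J. J (n,a1) * pd [(n,a2)] (?l ?m) J) \<in> K" for n
      by (intro K_coordmult pd_in_K lk_K)+
    have "pd rest (Lop NN a1 a2 (?l ?m)) (\<lambda>_. 0) = (\<Sum>n\<le>NN. pd rest (\<lambda>J. J (a2,n) * pd [(a1,n)] (?l ?m) J) (\<lambda>_. 0)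
        - pd rest (\<lambda>J. J (n,a1) * pd [(n,a2)] (?l ?m) J) (\<lambda>_. 0))"
    proof -
      have KD: "(\<lambda>J. J (a2,n) * pd [(a1,n)] (?l ?m) J - J (n,a1) * pd [(n,a2)] (?l ?m) J) \<in> K" for n
        by (rule K_diff[OF KA])
      show ?thesis unfolding Lop_def pdl_sum[OF finite_atMost KD] pdl_diff[OF KA] ..
    qed
    also have "\<dots> = (\<Sum>n\<le>NN. (if n = a3 then Pk (a1 # bs) ?m else 0) - (if n = z then Pk (a2 # bs) ?m else 0))"
    proof (intro sum.cong refl)
      fix n
      have A: "pd rest (\<lambda>J. J (a2,n) * pd [(a1,n)] (?l ?m) J) (\<lambda>_. 0) = (if n = a3 then Pk (a1 # bs) ?m else 0)"
      proof (cases "n = a3")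
        case True
        have "pd rest (\<lambda>J. J (a2,n) * pd [(a1,n)] (?l ?m) J) (\<lambda>_. 0) = pd (zip bs (tl ys)) (pd [(a1,a3)] (?l ?m)) (\<lambda>_. 0)"
          unfolding rest1 True using pick_in[OF pd_in_K[OF lk_K], of "(a2,a3)" "[]" "zip bs (tl ys)"] a2bs
          by (auto dest: set_zip_leftD)
        also have "\<dots> = pd (zip bs (tl ys) @ [(a1,a3)]) (?l ?m) (\<lambda>_. 0)" by (simp add: pd_append)
        also have "\<dots> = Pk (a1 # bs) ?m" unfolding Pk_def cyc1
          by (rule fun_cong[OF pd_perm[OF lk_K]]) simp
        finally show ?thesis using True by simp
      next
        case False
        have "(a2,n) \<notin> set rest" unfolding rest1 using False a2bs by (auto dest: set_zip_leftD)
        then show ?thesis using False pick_out[OF pd_in_K[OF lk_K]] by simp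
      qed
      have B: "pd rest (\<lambda>J. J (n,a1) * pd [(n,a2)] (?l ?m) J) (\<lambda>_. 0) = (if n = z then Pk (a2 # bs) ?m else 0)"
      proof (cases "n = z")
        case True
        have "pd rest (\<lambda>J. J (n,a1) * pd [(n,a2)] (?l ?m) J) (\<lambda>_. 0) = pd (zip xs' bs) (pd [(z,a2)] (?l ?m)) (\<lambda>_. 0)"
          unfolding rest2 True using pick_in[OF pd_in_K[OF lk_K], of "(z,a1)" "zip xs' bs" "[]"] a2bs
          by (auto dest: set_zip_rightD)
        also have "\<dots> = Pk (a2 # bs) ?m" unfolding Pk_def cyc2 by (simp add: pd_append)
        finally show ?thesis using True by simp
      next
        case False
        have "(n,a1) \<notin> set rest" unfolding rest2 using False a2bs by (auto dest: set_zip_rightD)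
        then show ?thesis using False pick_out[OF pd_in_K[OF lk_K]] by simp
      qed
      show "pd rest (\<lambda>J. J (a2,n) * pd [(a1,n)] (?l ?m) J) (\<lambda>_. 0) - pd rest (\<lambda>J. J (n,a1) * pd [(n,a2)] (?l ?m) J) (\<lambda>_. 0)
        = (if n = a3 then Pk (a1 # bs) ?m else 0) - (if n = z then Pk (a2 # bs) ?m else 0)"
        unfolding A B ..
    qed
    also have "\<dots> = Pk (a1 # bs) ?m - Pk (a2 # bs) ?m"
      using a3N zN by (simp add: sum_subtractf)
    finally show ?thesis using False unfolding P1 WI by simp
  qed
qed

end



lemma DD:
  fixes w :: "'b \<Rightarrow> 'a::comm_ring_1" and p :: "'b \<Rightarrow> 'b \<Rightarrow> 'a"
  assumes S: "finite S" "a1 \<notin> S" "a2 \<notin> S" "a1 \<noteq> a2"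
    and i: "\<And>b. b \<in> S \<Longrightarrow> k * p b a1 * p b a2 = p b a1 - p b a2"
    and ii: "k * p a1 a2 = 1" "k * p a2 a1 = -1"
  shows "k * (\<Sum>b\<in>insert a1 (insert a2 S). w b * (\<Prod>c\<in>insert a1 (insert a2 S) - {b}. p b c))
    = (\<Sum>b\<in>insert a1 S. w b * (\<Prod>c\<in>insert a1 S - {b}. p b c)) - (\<Sum>b\<in>insert a2 S. w b * (\<Prod>c\<in>insert a2 S - {b}. p b c))"
proof -
  have e1: "insert a1 (insert a2 S) - {a1} = insert a2 S" "insert a1 (insert a2 S) - {a2} = insert a1 S"
    "insert a1 S - {a1} = S" "insert a2 S - {a2} = S" using S by auto
  have e2: "b \<in> S \<Longrightarrow> insert a1 (insert a2 S) - {b} = insert a1 (insert a2 (S - {b}))" for b using S by auto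
  have e3: "b \<in> S \<Longrightarrow> insert a1 S - {b} = insert a1 (S - {b})" "b \<in> S \<Longrightarrow> insert a2 S - {b} = insert a2 (S - {b})" for b using S by auto
  have L: "(\<Sum>b\<in>insert a1 (insert a2 S). w b * (\<Prod>c\<in>insert a1 (insert a2 S) - {b}. p b c))
    = w a1 * (p a1 a2 * (\<Prod>c\<in>S. p a1 c)) + w a2 * (p a2 a1 * (\<Prod>c\<in>S. p a2 c))
      + (\<Sum>b\<in>S. w b * (p b a1 * p b a2 * (\<Prod>c\<in>S - {b}. p b c)))"
  proof -
    have "(\<Sum>b\<in>S. w b * (\<Prod>c\<in>insert a1 (insert a2 S) - {b}. p b c)) = (\<Sum>b\<in>S. w b * (p b a1 * p b a2 * (\<Prod>c\<in>S - {b}. p b c)))"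
      using S by (intro sum.cong refl) (simp add: e2 mult.assoc)
    then show ?thesis using S by (simp add: e1 add.assoc)
  qed
  have R1: "(\<Sum>b\<in>insert a1 S. w b * (\<Prod>c\<in>insert a1 S - {b}. p b c))
     = w a1 * (\<Prod>c\<in>S. p a1 c) + (\<Sum>b\<in>S. w b * (p b a1 * (\<Prod>c\<in>S - {b}. p b c)))"
  proof -
    have "(\<Sum>b\<in>S. w b * (\<Prod>c\<in>insert a1 S - {b}. p b c)) = (\<Sum>b\<in>S. w b * (p b a1 * (\<Prod>c\<in>S - {b}. p b c)))"
      using S by (intro sum.cong refl) (simp add: e3)
    then show ?thesis using S by (simp add: e1)
  qed
  have R2: "(\<Sum>b\<in>insert a2 S. w b * (\<Prod>c\<in>insert a2 S - {b}. p b c))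
     = w a2 * (\<Prod>c\<in>S. p a2 c) + (\<Sum>b\<in>S. w b * (p b a2 * (\<Prod>c\<in>S - {b}. p b c)))"
  proof -
    have "(\<Sum>b\<in>S. w b * (\<Prod>c\<in>insert a2 S - {b}. p b c)) = (\<Sum>b\<in>S. w b * (p b a2 * (\<Prod>c\<in>S - {b}. p b c)))"
      using S by (intro sum.cong refl) (simp add: e3)
    then show ?thesis using S by (simp add: e1)
  qed
  have M: "k * (\<Sum>b\<in>S. w b * (p b a1 * p b a2 * (\<Prod>c\<in>S - {b}. p b c)))
      = (\<Sum>b\<in>S. w b * (p b a1 * (\<Prod>c\<in>S - {b}. p b c))) - (\<Sum>b\<in>S. w b * (p b a2 * (\<Prod>c\<in>S - {b}. p b c)))"
  proof -
    have "k * (\<Sum>b\<in>S. w b * (p b a1 * p b a2 * (\<Prod>c\<in>S - {b}. p b c)))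
       = (\<Sum>b\<in>S. w b * ((k * p b a1 * p b a2) * (\<Prod>c\<in>S - {b}. p b c)))"
      by (simp add: sum_distrib_left ac_simps)
    also have "\<dots> = (\<Sum>b\<in>S. w b * ((p b a1 - p b a2) * (\<Prod>c\<in>S - {b}. p b c)))"
      using i by (intro sum.cong refl) simp
    finally show ?thesis by (simp add: sum_subtractf algebra_simps)
  qed
  have A1: "k * (w a1 * (p a1 a2 * (\<Prod>c\<in>S. p a1 c))) = w a1 * (\<Prod>c\<in>S. p a1 c)"
    using ii(1) by (metis mult.left_commute mult.assoc mult_1)
  have A2: "k * (w a2 * (p a2 a1 * (\<Prod>c\<in>S. p a2 c))) = - (w a2 * (\<Prod>c\<in>S. p a2 c))"
    using ii(2) by (metis mult.left_commute mult.assoc mult_minus1 mult_minus_left)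
  show ?thesis unfolding L R1 R2 distrib_left A1 A2 M by (simp add: algebra_simps)
qed

context model
begin

abbreviation "Gs \<equiv> Gcorr NN V \<kappa> E"

lemma logZ_eq: "\<bar>Im (l0 J)\<bar> < pi \<Longrightarrow> logZ NN V \<kappa> E J = LL J"
proof -
  assume a: "\<bar>Im (l0 J)\<bar> < pi"
  have "Ln (Rf J $ 0) = l0 J" unfolding Rf0 using a by (intro Ln_exp) auto
  then show ?thesis unfolding logZ_def fps_log_def Lf_def Rf_def[symmetric] by simp
qed

lemma Gs_nth: "Gs as $ k = complex_of_real (1 / V) * Pk as k"
proof -
  let ?U = "{J. \<bar>Im (l0 J)\<bar> < pi}"
  have U: "open {t. J(p := t) \<in> ?U}" for J p by (rule open_line_U[OF l0_K])
  have z: "(\<lambda>_. 0) \<in> ?U" by (simp add: l0_def)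
  have "pd (cycle_idx as) (\<lambda>J. logZ NN V \<kappa> E J $ k) (\<lambda>_. 0) = pd (cycle_idx as) (\<lambda>J. LL J $ k) (\<lambda>_. 0)"
    by (rule pd_local[OF U _ z]) (simp add: logZ_eq)
  then show ?thesis unfolding Gcorr_def Pk_def by simp
qed

lemma Gs_rec:
  assumes dist: "distinct (a1 # a2 # bs)" and bnd: "set (a1 # a2 # bs) \<subseteq> {..NN}" and Eab: "E a1 \<noteq> E a2"
  shows "fps_const (complex_of_real (E a1 ^ 2 - E a2 ^ 2)) * Gs (a1 # a2 # bs)
     = (if bs = [] then fps_const (complex_of_real (E a1 - E a2)) else 0) + fps_X * (Gs (a1 # bs) - Gs (a2 # bs))"
proof (rule fps_ext)
  fix k
  have V: "V \<noteq> 0" using Vpos by simp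
  have "complex_of_real (E a1 ^ 2 - E a2 ^ 2) * Gs (a1 # a2 # bs) $ k
     = complex_of_real (1 / V) * (complex_of_real (E a1 ^ 2 - E a2 ^ 2) * Pk (a1 # a2 # bs) k)"
    by (simp add: Gs_nth)
  also have "\<dots> = complex_of_real (1 / V) * (if k = 0 then (if bs = [] then complex_of_real (V * (E a1 - E a2)) else 0)
        else Pk (a1 # bs) (k - 1) - Pk (a2 # bs) (k - 1))"
    unfolding Pk_rec[OF dist bnd Eab] ..
  also have "\<dots> = ((if bs = [] then fps_const (complex_of_real (E a1 - E a2)) else 0) + fps_X * (Gs (a1 # bs) - Gs (a2 # bs))) $ k"
  proof (cases "k = 0")
    case True
    have V': "complex_of_real V \<noteq> 0" using V by simp
    show ?thesis using True V' by (auto simp: field_simps)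
  next
    case False
    then show ?thesis by (auto simp: fps_X_mult_nth Gs_nth algebra_simps)
  qed
  finally show "(fps_const (complex_of_real (E a1 ^ 2 - E a2 ^ 2)) * Gs (a1 # a2 # bs)) $ k
     = ((if bs = [] then fps_const (complex_of_real (E a1 - E a2)) else 0) + fps_X * (Gs (a1 # bs) - Gs (a2 # bs))) $ k"
    by simp
qed

definition Wf where "Wf b = fps_const 2 * fps_X * Gs [b] + fps_const (complex_of_real (2 * E b))"
definition Pf where "Pf b c = fps_const (complex_of_real (1 / ((E b)^2 - (E c)^2)))"
definition FF where "FF A = (\<Sum>b\<in>A. Wf b * (\<Prod>c\<in>A - {b}. Pf b c))"

lemma fcm: "fps_const (complex_of_real r) * fps_const (complex_of_real s) = fps_const (complex_of_real (r * s))"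
  by (simp add: fps_const_mult[symmetric] del: fps_const_mult)

lemma fcd: "fps_const (complex_of_real r) - fps_const (complex_of_real s) = fps_const (complex_of_real (r - s))"
  by simp

lemma fps_const_cancel: "(c::complex) \<noteq> 0 \<Longrightarrow> fps_const c * A = fps_const c * B \<Longrightarrow> A = B"
  by simp

lemma closed_form:
  assumes Einj: "\<And>x y. x \<le> NN \<Longrightarrow> y \<le> NN \<Longrightarrow> x \<noteq> y \<Longrightarrow> E x \<noteq> E y"
  shows "distinct (a1 # a2 # bs) \<Longrightarrow> set (a1 # a2 # bs) \<subseteq> {..NN} \<Longrightarrow>
    Gs (a1 # a2 # bs) = fps_const (1/2) * fps_X ^ length bs * FF (set (a1 # a2 # bs))"
proof (induction bs arbitrary: a1 a2)
  have sq: "x \<le> NN \<Longrightarrow> y \<le> NN \<Longrightarrow> x \<noteq> y \<Longrightarrow> E x ^ 2 \<noteq> E y ^ 2" for x y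
  proof -
    assume xy: "x \<le> NN" "y \<le> NN" "x \<noteq> y"
    have "E x \<noteq> E y" by (rule Einj[OF xy])
    moreover have "0 \<le> E x" "0 \<le> E y" using Epos[of x] Epos[of y] by auto
    ultimately show ?thesis by (simp add: power2_eq_iff_nonneg)
  qed
  have i: "x \<le> NN \<Longrightarrow> y \<le> NN \<Longrightarrow> z \<le> NN \<Longrightarrow> distinct [x,y,z] \<Longrightarrow>
    fps_const (complex_of_real (E x ^ 2 - E y ^ 2)) * Pf z x * Pf z y = Pf z x - Pf z y" for x y z
  proof -
    assume xyz: "x \<le> NN" "y \<le> NN" "z \<le> NN" "distinct [x,y,z]"
    have n1: "E z ^ 2 - E x ^ 2 \<noteq> 0" "E z ^ 2 - E y ^ 2 \<noteq> 0" using sq xyz by auto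
    have "(E x ^ 2 - E y ^ 2) * (1 / (E z ^ 2 - E x ^ 2)) * (1 / (E z ^ 2 - E y ^ 2)) = 1 / (E z ^ 2 - E x ^ 2) - 1 / (E z ^ 2 - E y ^ 2)"
      using n1 by (simp add: field_simps)
    then show ?thesis unfolding Pf_def fcm fcd by simp
  qed
  have ii: "x \<le> NN \<Longrightarrow> y \<le> NN \<Longrightarrow> x \<noteq> y \<Longrightarrow>
    fps_const (complex_of_real (E x ^ 2 - E y ^ 2)) * Pf x y = 1 \<and> fps_const (complex_of_real (E x ^ 2 - E y ^ 2)) * Pf y x = -1" for x y
  proof -
    assume xy: "x \<le> NN" "y \<le> NN" "x \<noteq> y"
    have n1: "E x ^ 2 - E y ^ 2 \<noteq> 0" "E y ^ 2 - E x ^ 2 \<noteq> 0" using sq xy by auto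
    have "(E x ^ 2 - E y ^ 2) * (1 / (E x ^ 2 - E y ^ 2)) = 1" "(E x ^ 2 - E y ^ 2) * (1 / (E y ^ 2 - E x ^ 2)) = -1"
      using n1 by (simp_all add: field_simps)
    then show ?thesis unfolding Pf_def fcm by simp
  qed
  {
    case Nil
    let ?k = "complex_of_real (E a1 ^ 2 - E a2 ^ 2)"
    have ab: "a1 \<le> NN" "a2 \<le> NN" "a1 \<noteq> a2" using Nil by auto
    have "E a1 ^ 2 - E a2 ^ 2 \<noteq> 0" using sq[OF ab] by simp
    then have k0: "?k \<noteq> 0" by (metis of_real_eq_0_iff)
    have DD0: "fps_const ?k * FF {a1, a2} = Wf a1 - Wf a2"
      using DD[of "{}" a1 a2 "fps_const ?k" Pf Wf] ab ii[OF ab] unfolding FF_def by simp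
    show ?case
    proof (rule fps_const_cancel[OF k0])
      have "fps_const ?k * Gs [a1, a2] = fps_const (complex_of_real (E a1 - E a2)) + fps_X * (Gs [a1] - Gs [a2])"
        using Gs_rec[of a1 a2 "[]"] Nil Einj[OF ab] by simp
      also have "\<dots> = fps_const (1/2) * (Wf a1 - Wf a2)"
      proof (rule fps_ext)
        fix n
        show "(fps_const (complex_of_real (E a1 - E a2)) + fps_X * (Gs [a1] - Gs [a2])) $ n = (fps_const (1/2) * (Wf a1 - Wf a2)) $ n"
          unfolding Wf_def by (cases "n = 0") (simp_all add: fps_X_mult_nth mult.assoc algebra_simps)
      qed
      also have "\<dots> = fps_const ?k * (fps_const (1 / 2) * fps_X ^ length [] * FF (set [a1, a2]))"
        using DD0 by (simp add: ac_simps)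
      finally show "fps_const ?k * Gs [a1, a2] = fps_const ?k * (fps_const (1 / 2) * fps_X ^ length [] * FF (set [a1, a2]))" .
    qed
  next
    case (Cons b bs)
    let ?k = "complex_of_real (E a1 ^ 2 - E a2 ^ 2)"
    let ?S = "set (b # bs)"
    have ab: "a1 \<le> NN" "a2 \<le> NN" "a1 \<noteq> a2" using Cons.prems by auto
    have "E a1 ^ 2 - E a2 ^ 2 \<noteq> 0" using sq[OF ab] by simp
    then have k0: "?k \<noteq> 0" by (metis of_real_eq_0_iff)
    have IH1: "Gs (a1 # b # bs) = fps_const (1/2) * fps_X ^ length bs * FF (insert a1 ?S)"
      using Cons.IH[of a1 b] Cons.prems by simp
    have IH2: "Gs (a2 # b # bs) = fps_const (1/2) * fps_X ^ length bs * FF (insert a2 ?S)"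
      using Cons.IH[of a2 b] Cons.prems by auto
    have DDS: "fps_const ?k * FF (insert a1 (insert a2 ?S)) = FF (insert a1 ?S) - FF (insert a2 ?S)"
      unfolding FF_def
    proof (rule DD)
      show "finite ?S" "a1 \<notin> ?S" "a2 \<notin> ?S" "a1 \<noteq> a2" using Cons.prems by auto
      show "fps_const ?k * Pf a1 a2 = 1" "fps_const ?k * Pf a2 a1 = -1" using ii[OF ab] by auto
      fix z assume "z \<in> ?S"
      then show "fps_const ?k * Pf z a1 * Pf z a2 = Pf z a1 - Pf z a2"
        using Cons.prems by (intro i) auto
    qed
    show ?case
    proof (rule fps_const_cancel[OF k0])
      have "fps_const ?k * Gs (a1 # a2 # b # bs) = fps_X * (Gs (a1 # b # bs) - Gs (a2 # b # bs))"
        using Gs_rec[of a1 a2 "b # bs"] Cons.prems Einj[OF ab] by simp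
      also have "\<dots> = fps_const (1/2) * fps_X ^ length (b # bs) * (FF (insert a1 ?S) - FF (insert a2 ?S))"
        unfolding IH1 IH2 by (simp add: algebra_simps)
      also have "\<dots> = fps_const ?k * (fps_const (1/2) * fps_X ^ length (b # bs) * FF (set (a1 # a2 # b # bs)))"
        unfolding DDS[symmetric] by (simp add: ac_simps)
      finally show "fps_const ?k * Gs (a1 # a2 # b # bs) = fps_const ?k * (fps_const (1/2) * fps_X ^ length (b # bs) * FF (set (a1 # a2 # b # bs)))" .
    qed
  }
qed

end



theorem proposition2:
  fixes NN :: nat and V \<mu> \<kappa> :: real and e :: "real \<Rightarrow> real"
    and N :: nat and a :: "nat \<Rightarrow> nat"
  assumes "NN \<ge> 1" and "V > 0" and "\<mu> > 0"
    and "strict_mono_on {0..} e" and "e 0 = 0" and "\<forall>x\<ge>0. e x \<ge> 0"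
    and "\<forall>x\<ge>0. e differentiable (at x within {0..})"
    and "N \<ge> 2" and "inj_on a {1..N}" and "\<forall>k\<in>{1..N}. a k \<le> NN"
  shows "let E = Eval \<mu> V e;
             W = (\<lambda>b. fps_const 2 * fps_X * Gcorr NN V \<kappa> E [b]
                        + fps_const (complex_of_real (2 * E b)));
             P = (\<lambda>b c. complex_of_real (1 / ((E b)^2 - (E c)^2)))
         in Gcorr NN V \<kappa> E (map a [1..<N+1])
            = fps_const (1/2) * fps_X ^ (N - 2)
              * (\<Sum>k=1..N. W (a k) * (\<Prod>l\<in>{1..N} - {k}. fps_const (P (a k) (a l))))"
proof -
  define E where "E = Eval \<mu> V e"
  have Vpos: "V > 0" and mupos: "\<mu> > 0" using assms by auto
  have arg: "real m / (\<mu>^2 * V) \<ge> 0" for m using Vpos mupos by simp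
  have Epos: "E n > 0" for n
  proof -
    have "e (real n / (\<mu>^2 * V)) \<ge> 0" using assms(6) arg by blast
    then show ?thesis unfolding E_def Eval_def using mupos by (simp add: add_pos_nonneg)
  qed
  have Einj: "E x \<noteq> E y" if xy: "x \<noteq> y" for x y
  proof -
    have sm: "\<And>u v. u \<ge> 0 \<Longrightarrow> v \<ge> 0 \<Longrightarrow> u < v \<Longrightarrow> e u < e v"
      using assms(4) unfolding strict_mono_on_def by auto
    have d: "real x / (\<mu>^2 * V) \<noteq> real y / (\<mu>^2 * V)" using xy Vpos mupos by (simp add: divide_cancel_right)
    then have "e (real x / (\<mu>^2 * V)) \<noteq> e (real y / (\<mu>^2 * V))"
      using sm[OF arg arg] by (metis linorder_neqE_linordered_idom less_irrefl)
    then show ?thesis unfolding E_def Eval_def using mupos by simp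
  qed
  interpret M: model NN V \<kappa> E by unfold_locales (auto simp: Vpos Epos)
  define bs where "bs = map a [3..<N+1]"
  have as: "map a [1..<N+1] = a 1 # a 2 # bs"
  proof -
    have "[1..<N+1] = 1 # [2..<N+1]" using assms(8) by (simp add: upt_conv_Cons numeral_2_eq_2 numeral_3_eq_3)
    also have "[2..<N+1] = 2 # [3..<N+1]" using assms(8) by (simp add: upt_conv_Cons numeral_2_eq_2 numeral_3_eq_3)
    finally have "[1..<N+1] = 1 # 2 # [3..<N+1]" .
    then show ?thesis unfolding bs_def by simp
  qed
  have setas: "set (map a [1..<N+1]) = a ` {1..N}" by auto
  have dist: "distinct (map a [1..<N+1])"
  proof -
    have s: "set [1..<N+1] = {1..N}" by auto
    show ?thesis unfolding distinct_map s using assms(9) by simp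
  qed
  have bnd: "set (map a [1..<N+1]) \<subseteq> {..NN}" using assms(10) by auto
  have lbs: "length bs = N - 2" unfolding bs_def using assms(8) by auto
  have CF: "M.Gs (map a [1..<N+1]) = fps_const (1/2) * fps_X ^ (N - 2) * M.FF (a ` {1..N})"
    using M.closed_form[of "a 1" "a 2" bs] Einj dist bnd unfolding as lbs[symmetric] setas[symmetric] as
    by auto
  have FF: "M.FF (a ` {1..N}) = (\<Sum>k=1..N. M.Wf (a k) * (\<Prod>l\<in>{1..N} - {k}. M.Pf (a k) (a l)))"
  proof -
    have "M.FF (a ` {1..N}) = (\<Sum>k=1..N. M.Wf (a k) * (\<Prod>c\<in>a ` {1..N} - {a k}. M.Pf (a k) c))"
      unfolding M.FF_def by (rule sum.reindex[OF assms(9), unfolded comp_def])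
    also have "\<dots> = (\<Sum>k=1..N. M.Wf (a k) * (\<Prod>l\<in>{1..N} - {k}. M.Pf (a k) (a l)))"
    proof (intro sum.cong refl arg_cong[where f = "\<lambda>x. M.Wf _ * x"])
      fix k assume k: "k \<in> {1..N}"
      have "a ` {1..N} - {a k} = a ` ({1..N} - {k})" using assms(9) k by (auto simp: inj_on_eq_iff)
      moreover have "inj_on a ({1..N} - {k})" using assms(9) by (rule inj_on_subset) auto
      ultimately show "(\<Prod>c\<in>a ` {1..N} - {a k}. M.Pf (a k) c) = (\<Prod>l\<in>{1..N} - {k}. M.Pf (a k) (a l))"
        by (simp add: prod.reindex)
    qed
    finally show ?thesis .
  qed
  show ?thesis unfolding Let_def E_def[symmetric] CF FF M.Wf_def M.Pf_def ..
qed


end
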